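(* Let $V$ be a $(\mathfrak g,K)$-module. For integers $h\equiv p\bmod2$, $p\ge0$, define on $V_{h,p,p}$ the operators $S^{3}_{1}=Z_{31}$, $S^{-3}_{1}=Z_{23}$, $S^{3}_{-1}=Z_{32}+\frac1{2(p+1)}Z_{12}Z_{31}$, $S^{-3}_{-1}=Z_{13}-\frac1{2(p+1)}Z_{12}Z_{23}$. Then $S^3_1$ maps $V_{h,p,p}$ into $V_{h+3,p+1,p+1}$, $S^{-3}_1$ maps it into $V_{h-3,p+1,p+1}$, $S^3_{-1}$ into $V_{h+3,p-1,p-1}$ and $S^{-3}_{-1}$ into $V_{h-3,p-1,p-1}$. Moreover $S^3_1$ and $S^{-3}_1$ commute, and $S^{3}_{-1}$ and $S^{-3}_{-1}$ commute (as compositions between highest weight spaces).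
   Context: $G=\mathrm{SU}(2,1)=\{g\in\mathrm{SL}_3(\mathbb C):\bar g^tI_{2,1}g=I_{2,1}\}$, $I_{2,1}=\mathrm{diag}(1,1,-1)$, with Lie algebra $\mathfrak g$ whose complexification is identified with $\mathfrak{sl}_3(\mathbb C)$; $E_{ij}$ denotes the matrix unit. $K=\{k(\eta,\alpha,\beta)\}$, $k(\eta,\alpha,\beta)=\begin{pmatrix}\eta\alpha&\eta\beta&0\\-\eta\bar\beta&\eta\bar\alpha&0\\0&0&\eta^{-2}\end{pmatrix}$ ($|\eta|=1,|\alpha|^2+|\beta|^2=1$). Irreducible representations of $K$: $\tau^h_p$ ($p\ge0$, $h\equiv p\bmod2$), $\tau^h_p(k(\eta,\alpha,\beta))=\eta^{-h}\tau_p\begin{pmatrix}\alpha&\beta\\-\bar\beta&\bar\alpha\end{pmatrix}$, $\tau_p$ the $(p+1)$-dim. irreducible representation of $\mathrm{SU}(2)$. A $(\mathfrak g,K)$-module has compatible actions of $\mathfrak g$ (extended complex-linearly to $\mathfrak{sl}_3(\mathbb C)$) and $K$, all vectors $K$-finite. $V_{h,p}$ is the $\tau^h_p$-isotypic subspace, and $V_{h,p,p}=\{v\in V_{h,p}:W_0v=-ipv\}$ with $W_0=\mathrm{diag}(i,-i,0)$ ($V_{h,p,p}=0$ if $p<0$). Elements of $\mathfrak{sl}_3(\mathbb C)$: $Z_{12}=2E_{12}$, $Z_{21}=-2E_{21}$, $Z_{13}=E_{13}$, $Z_{31}=E_{31}$, $Z_{23}=E_{23}$, $Z_{32}=E_{32}$.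 *)

theory Defs
  imports "HOL-Analysis.Analysis"
begin

type_synonym cmat = "complex^3^3"

definition Emat :: "3 \<Rightarrow> 3 \<Rightarrow> cmat" where
  "Emat i j = (\<chi> a b. if a = i \<and> b = j then 1 else 0)"

definition msc :: "complex \<Rightarrow> cmat \<Rightarrow> cmat" (infixr "*m" 75) where
  "c *m X = (\<chi> i j. c * X $ i $ j)"

definition mtrace :: "cmat \<Rightarrow> complex" where
  "mtrace X = (\<Sum>i\<in>UNIV. X $ i $ i)"

definition sl3 :: "cmat set" where
  "sl3 = {X. mtrace X = 0}"

definition kmat :: "complex \<Rightarrow> complex \<Rightarrow> complex \<Rightarrow> cmat" where
  "kmat \<eta> \<alpha> \<beta> = (\<eta> * \<alpha>) *m Emat 1 1 + (\<eta> * \<beta>) *m Emat 1 2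
      + (- \<eta> * cnj \<beta>) *m Emat 2 1 + (\<eta> * cnj \<alpha>) *m Emat 2 2
      + inverse (\<eta>^2) *m Emat 3 3"

definition Kgrp :: "cmat set" where
  "Kgrp = {kmat \<eta> \<alpha> \<beta> | \<eta> \<alpha> \<beta>. cmod \<eta> = 1 \<and> (cmod \<alpha>)^2 + (cmod \<beta>)^2 = 1}"

definition W0 :: cmat where "W0 = \<i> *m Emat 1 1 + (- \<i>) *m Emat 2 2"
definition Z12 :: cmat where "Z12 = 2 *m Emat 1 2"
definition Z21 :: cmat where "Z21 = (-2) *m Emat 2 1"
definition Z13 :: cmat where "Z13 = Emat 1 3"
definition Z31 :: cmat where "Z31 = Emat 3 1"
definition Z23 :: cmat where "Z23 = Emat 2 3"
definition Z32 :: cmat where "Z32 = Emat 3 2"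

section \<open>Complex vector spaces as real normed spaces with a complex structure J\<close>

definition cscale :: "('v::real_vector \<Rightarrow> 'v) \<Rightarrow> complex \<Rightarrow> 'v \<Rightarrow> 'v" where
  "cscale J c v = Re c *\<^sub>R v + Im c *\<^sub>R J v"

definition clin :: "('v::real_vector \<Rightarrow> 'v) \<Rightarrow> ('v \<Rightarrow> 'v) \<Rightarrow> bool" where
  "clin J f \<longleftrightarrow> linear f \<and> (\<forall>v. f (J v) = J (f v))"

definition gK_module ::
  "('v::real_normed_vector \<Rightarrow> 'v) \<Rightarrow> (cmat \<Rightarrow> 'v \<Rightarrow> 'v) \<Rightarrow> (cmat \<Rightarrow> 'v \<Rightarrow> 'v) \<Rightarrow> bool" where
  "gK_module J gact kact \<longleftrightarrow>
     \<comment> \<open>complex structure\<close>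
     linear J \<and> (\<forall>v. J (J v) = - v) \<and>
     \<comment> \<open>representation of sl_3(C) = complexified Lie algebra\<close>
     (\<forall>X\<in>sl3. clin J (gact X)) \<and>
     (\<forall>X\<in>sl3. \<forall>Y\<in>sl3. \<forall>a b v.
        gact (a *m X + b *m Y) v = cscale J a (gact X v) + cscale J b (gact Y v)) \<and>
     (\<forall>X\<in>sl3. \<forall>Y\<in>sl3. \<forall>v.
        gact (X ** Y - Y ** X) v = gact X (gact Y v) - gact Y (gact X v)) \<and>
     \<comment> \<open>representation of K\<close>
     (\<forall>k\<in>Kgrp. clin J (kact k)) \<and>
     (\<forall>v. kact (mat 1) v = v) \<and>
     (\<forall>k1\<in>Kgrp. \<forall>k2\<in>Kgrp. \<forall>v. kact (k1 ** k2) v = kact k1 (kact k2 v)) \<and>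
     \<comment> \<open>compatibility with the adjoint action\<close>
     (\<forall>k\<in>Kgrp. \<forall>X\<in>sl3. \<forall>v.
        kact k (gact X v) = gact (k ** X ** matrix_inv k) (kact k v)) \<and>
     \<comment> \<open>K-finiteness\<close>
     (\<forall>v. \<exists>B. finite B \<and> v \<in> span B \<and> J ` span B \<subseteq> span B \<and>
                (\<forall>k\<in>Kgrp. kact k ` span B \<subseteq> span B)) \<and>
     \<comment> \<open>the K-action is differentiable, with differential the action of Lie(K)\<close>
     (\<forall>\<gamma> X v. (\<forall>t. \<gamma> t \<in> Kgrp) \<and> \<gamma> 0 = mat 1 \<and> (\<gamma> has_vector_derivative X) (at 0) \<longrightarrow>
        ((\<lambda>t. kact (\<gamma> t) v) has_vector_derivative gact X v) (at 0))"

text \<open>Model of tau_p: homogeneous polynomials of degree p in (z1,z2), with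
  (tau_p(u) f)(z) = f(z u) for the row vector z.\<close>

definition Ppoly :: "nat \<Rightarrow> (complex \<times> complex \<Rightarrow> complex) set" where
  "Ppoly p = {(\<lambda>z. \<Sum>j\<le>p. c j * fst z ^ j * snd z ^ (p - j)) | c. True}"

definition tau :: "complex \<Rightarrow> complex \<Rightarrow> (complex \<times> complex \<Rightarrow> complex) \<Rightarrow> (complex \<times> complex \<Rightarrow> complex)" where
  "tau \<alpha> \<beta> f = (\<lambda>z. f (\<alpha> * fst z - cnj \<beta> * snd z, \<beta> * fst z + cnj \<alpha> * snd z))"

definition Khom :: "('v::real_vector \<Rightarrow> 'v) \<Rightarrow> (cmat \<Rightarrow> 'v \<Rightarrow> 'v) \<Rightarrow> int \<Rightarrow> nat
                    \<Rightarrow> ((complex \<times> complex \<Rightarrow> complex) \<Rightarrow> 'v) set" where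
  "Khom J kact h p = {\<phi>.
     (\<forall>f\<in>Ppoly p. \<forall>g\<in>Ppoly p. \<forall>a b.
        \<phi> (\<lambda>z. a * f z + b * g z) = cscale J a (\<phi> f) + cscale J b (\<phi> g)) \<and>
     (\<forall>\<eta> \<alpha> \<beta>. cmod \<eta> = 1 \<and> (cmod \<alpha>)^2 + (cmod \<beta>)^2 = 1 \<longrightarrow>
        (\<forall>f\<in>Ppoly p. \<phi> (\<lambda>z. \<eta> powi (- h) * tau \<alpha> \<beta> f z) = kact (kmat \<eta> \<alpha> \<beta>) (\<phi> f)))}"

definition Viso :: "('v::real_vector \<Rightarrow> 'v) \<Rightarrow> (cmat \<Rightarrow> 'v \<Rightarrow> 'v) \<Rightarrow> int \<Rightarrow> nat \<Rightarrow> 'v set" where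
  "Viso J kact h p = span (\<Union>\<phi>\<in>Khom J kact h p. \<phi> ` Ppoly p)"

definition Vhpp :: "('v::real_vector \<Rightarrow> 'v) \<Rightarrow> (cmat \<Rightarrow> 'v \<Rightarrow> 'v) \<Rightarrow> (cmat \<Rightarrow> 'v \<Rightarrow> 'v)
                    \<Rightarrow> int \<Rightarrow> int \<Rightarrow> 'v set" where
  "Vhpp J gact kact h p = (if p < 0 then {0} else
     {v \<in> Viso J kact h (nat p). gact W0 v = cscale J (- \<i> * of_int p) v})"

definition S_3_1 :: "(cmat \<Rightarrow> 'v \<Rightarrow> 'v) \<Rightarrow> 'v \<Rightarrow> 'v" where
  "S_3_1 gact v = gact Z31 v"

definition S_m3_1 :: "(cmat \<Rightarrow> 'v \<Rightarrow> 'v) \<Rightarrow> 'v \<Rightarrow> 'v" where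
  "S_m3_1 gact v = gact Z23 v"

definition S_3_m1 :: "('v::real_vector \<Rightarrow> 'v) \<Rightarrow> (cmat \<Rightarrow> 'v \<Rightarrow> 'v) \<Rightarrow> int \<Rightarrow> 'v \<Rightarrow> 'v" where
  "S_3_m1 J gact p v = gact Z32 v + cscale J (1 / (2 * (of_int p + 1))) (gact Z12 (gact Z31 v))"

definition S_m3_m1 :: "('v::real_vector \<Rightarrow> 'v) \<Rightarrow> (cmat \<Rightarrow> 'v \<Rightarrow> 'v) \<Rightarrow> int \<Rightarrow> 'v \<Rightarrow> 'v" where
  "S_m3_m1 J gact p v = gact Z13 v - cscale J (1 / (2 * (of_int p + 1))) (gact Z12 (gact Z23 v))"

end

theory Submission
  imports Defs
begin

section \<open>Complex structure\<close>

locale cstr =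
  fixes J :: "'v::real_vector \<Rightarrow> 'v"
  assumes Jlin: "linear J" and JJ: "\<And>v. J (J v) = - v"
begin

lemma J_add: "J (x + y) = J x + J y" using Jlin by (simp add: linear_add)
lemma J_scaleR: "J (r *\<^sub>R x) = r *\<^sub>R J x" using Jlin by (simp add: linear_scale)
lemma J_0: "J 0 = 0" using Jlin by (simp add: linear_0)
lemma J_neg: "J (- x) = - J x" using Jlin by (simp add: linear_neg)
lemma J_diff: "J (x - y) = J x - J y" using Jlin by (simp add: linear_diff)

lemma cs_add_left: "cscale J (a + b) v = cscale J a v + cscale J b v"
  by (simp add: cscale_def algebra_simps)
lemma cs_add_right: "cscale J c (x + y) = cscale J c x + cscale J c y"
  by (simp add: cscale_def algebra_simps J_add)
lemma cs_diff_right: "cscale J c (x - y) = cscale J c x - cscale J c y"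
  by (simp add: cscale_def algebra_simps J_diff)
lemma cs_diff_left: "cscale J (a - b) v = cscale J a v - cscale J b v"
  by (simp add: cscale_def algebra_simps)
lemma cs_neg_right: "cscale J c (- x) = - cscale J c x"
  by (simp add: cscale_def algebra_simps J_neg)
lemma cs_neg_left: "cscale J (- c) x = - cscale J c x"
  by (simp add: cscale_def algebra_simps)
lemma cs_0_left[simp]: "cscale J 0 v = 0" by (simp add: cscale_def)
lemma cs_0_right[simp]: "cscale J c 0 = 0" by (simp add: cscale_def J_0)
lemma cs_1[simp]: "cscale J 1 v = v" by (simp add: cscale_def)
lemma cs_of_real: "cscale J (of_real r) v = r *\<^sub>R v" by (simp add: cscale_def)
lemma cs_of_nat: "cscale J (of_nat n) v = real n *\<^sub>R v" by (simp add: cscale_def)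
lemma cs_of_int: "cscale J (of_int n) v = real_of_int n *\<^sub>R v" by (simp add: cscale_def)
lemma cs_numeral: "cscale J (numeral n) v = numeral n *\<^sub>R v" by (simp add: cscale_def)
lemma cs_of_real_mult: "cscale J (of_real r * c) v = r *\<^sub>R cscale J c v"
  by (simp add: cscale_def algebra_simps)
lemma cs_mult: "cscale J a (cscale J b v) = cscale J (a * b) v"
  by (simp add: cscale_def algebra_simps J_add J_scaleR JJ)
lemma cs_scaleR: "cscale J c (r *\<^sub>R v) = r *\<^sub>R cscale J c v"
  by (simp add: cscale_def algebra_simps J_scaleR)
lemma cs_J: "J (cscale J c v) = cscale J c (J v)"
  by (simp add: cscale_def algebra_simps J_add J_scaleR JJ)
lemma cs_sum: "cscale J c (sum f S) = (\<Sum>i\<in>S. cscale J c (f i))"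
  by (induction S rule: infinite_finite_induct) (simp_all add: cs_add_right)
lemma cs_ii: "cscale J \<i> v = J v" by (simp add: cscale_def)

lemma clin_cs: "clin J f \<Longrightarrow> f (cscale J c v) = cscale J c (f v)"
  unfolding clin_def cscale_def by (simp add: linear_add linear_scale)
lemma clin_add: "clin J f \<Longrightarrow> f (x + y) = f x + f y"
  unfolding clin_def by (simp add: linear_add)
lemma clin_diff: "clin J f \<Longrightarrow> f (x - y) = f x - f y"
  unfolding clin_def by (simp add: linear_diff)
lemma clin_scaleR: "clin J f \<Longrightarrow> f (r *\<^sub>R x) = r *\<^sub>R f x"
  unfolding clin_def by (simp add: linear_scale)
lemma clin_0: "clin J f \<Longrightarrow> f 0 = 0"
  unfolding clin_def by (simp add: linear_0)
lemma clin_neg: "clin J f \<Longrightarrow> f (- x) = - f x"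
  unfolding clin_def by (simp add: linear_neg)
lemma clin_sum: "clin J f \<Longrightarrow> f (sum g S) = (\<Sum>i\<in>S. f (g i))"
  unfolding clin_def by (simp add: linear_sum)

end

section \<open>Matrices\<close>

lemma three_neq[simp]: "(1::3) \<noteq> 2" "(1::3) \<noteq> 3" "(2::3) \<noteq> 3" "(2::3) \<noteq> 1" "(3::3) \<noteq> 1" "(3::3) \<noteq> 2"
  by simp_all

lemma Emat_mult: "Emat i j ** Emat k l = (if j = k then Emat i l else 0)"
proof -
  have "\<And>a b. (\<Sum>x\<in>UNIV. (if a = i \<and> x = j then 1 else 0) * (if x = k \<and> b = l then 1 else (0::complex)))
     = (if j = k \<and> a = i \<and> b = l then 1 else 0)"
    by (simp add: if_distrib[where f="\<lambda>x. x * _"] cong: if_cong)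
  then show ?thesis by (auto simp: vec_eq_iff matrix_matrix_mult_def Emat_def)
qed

lemma mtrace_Emat: "mtrace (Emat i j) = (if i = j then 1 else 0)"
proof (cases "i = j")
  case False
  then have "\<And>a. \<not> (a = i \<and> a = j)" by auto
  then show ?thesis using False by (auto simp: mtrace_def Emat_def intro!: sum.neutral)
qed (simp add: mtrace_def Emat_def)
lemma mtrace_msc: "mtrace (c *m X) = c * mtrace X"
  by (simp add: mtrace_def msc_def sum_distrib_left)
lemma mtrace_add: "mtrace (X + Y) = mtrace X + mtrace Y"
  by (simp add: mtrace_def sum.distrib)
lemma mtrace_diff: "mtrace (X - Y) = mtrace X - mtrace Y"
  by (simp add: mtrace_def sum_subtractf)

lemma sl3_Emat: "i \<noteq> j \<Longrightarrow> Emat i j \<in> sl3"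
  by (simp add: sl3_def mtrace_Emat)
lemma sl3_msc: "X \<in> sl3 \<Longrightarrow> c *m X \<in> sl3"
  by (simp add: sl3_def mtrace_msc)
lemma sl3_add: "X \<in> sl3 \<Longrightarrow> Y \<in> sl3 \<Longrightarrow> X + Y \<in> sl3"
  by (simp add: sl3_def mtrace_add)
lemma sl3_diff: "X \<in> sl3 \<Longrightarrow> Y \<in> sl3 \<Longrightarrow> X - Y \<in> sl3"
  by (simp add: sl3_def mtrace_diff)
lemma sl3_W0: "W0 \<in> sl3"
  by (simp add: sl3_def W0_def mtrace_add mtrace_msc mtrace_Emat)
lemma sl3_0: "0 \<in> sl3" by (simp add: sl3_def mtrace_def)

lemma msc_0[simp]: "0 *m X = 0" by (simp add: msc_def vec_eq_iff)
lemma msc_1[simp]: "1 *m X = X" by (simp add: msc_def vec_eq_iff)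
lemma msc_Emat_nth: "(c *m Emat i j) $ a $ b = (if a = i \<and> b = j then c else 0)"
  by (simp add: msc_def Emat_def)

lemmas mat_simps = vec_eq_iff forall_3 msc_def Emat_def matrix_matrix_mult_def sum_3 mat_def

lemma kmat_one: "kmat 1 1 0 = mat 1"
  by (auto simp: kmat_def mat_simps)

lemma kmat_mult_inv:
  assumes "\<eta> * cnj \<eta> = 1" "\<alpha> * cnj \<alpha> + \<beta> * cnj \<beta> = 1"
  shows "kmat \<eta> \<alpha> \<beta> ** kmat (cnj \<eta>) (cnj \<alpha>) (- \<beta>) = mat 1"
    "kmat (cnj \<eta>) (cnj \<alpha>) (- \<beta>) ** kmat \<eta> \<alpha> \<beta> = mat 1"
proof -
  have e: "cnj \<eta> = inverse \<eta>" "\<eta> \<noteq> 0" using assms(1)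
    by (auto simp: inverse_unique[of \<eta> "cnj \<eta>"])
  show "kmat \<eta> \<alpha> \<beta> ** kmat (cnj \<eta>) (cnj \<alpha>) (- \<beta>) = mat 1"
    using assms(2) e by (simp add: e kmat_def mat_simps field_simps; algebra)
  show "kmat (cnj \<eta>) (cnj \<alpha>) (- \<beta>) ** kmat \<eta> \<alpha> \<beta> = mat 1"
    using assms(2) e by (simp add: e kmat_def mat_simps field_simps; algebra)
qed

lemma matrix_inv_kmat:
  assumes "\<eta> * cnj \<eta> = 1" "\<alpha> * cnj \<alpha> + \<beta> * cnj \<beta> = 1"
  shows "matrix_inv (kmat \<eta> \<alpha> \<beta>) = kmat (cnj \<eta>) (cnj \<alpha>) (- \<beta>)"
  unfolding matrix_inv_def
proof (rule some_equality)
  show "kmat \<eta> \<alpha> \<beta> ** kmat (cnj \<eta>) (cnj \<alpha>) (- \<beta>) = mat 1 \<and> kmat (cnj \<eta>) (cnj \<alpha>) (- \<beta>) ** kmat \<eta> \<alpha> \<beta> = mat 1"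
    using kmat_mult_inv[OF assms] by simp
  fix B assume B: "kmat \<eta> \<alpha> \<beta> ** B = mat 1 \<and> B ** kmat \<eta> \<alpha> \<beta> = mat 1"
  have "B = B ** (kmat \<eta> \<alpha> \<beta> ** kmat (cnj \<eta>) (cnj \<alpha>) (- \<beta>))"
    using kmat_mult_inv[OF assms] by (simp add: matrix_mul_rid)
  also have "\<dots> = (B ** kmat \<eta> \<alpha> \<beta>) ** kmat (cnj \<eta>) (cnj \<alpha>) (- \<beta>)"
    by (simp add: matrix_mul_assoc)
  also have "\<dots> = kmat (cnj \<eta>) (cnj \<alpha>) (- \<beta>)" using B by (simp add: matrix_mul_lid)
  finally show "B = kmat (cnj \<eta>) (cnj \<alpha>) (- \<beta>)" .
qed

lemma Ad_kmat:
  assumes "\<eta> * cnj \<eta> = 1"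
  shows "kmat \<eta> \<alpha> \<beta> ** Emat 3 1 ** kmat (cnj \<eta>) (cnj \<alpha>) (- \<beta>)
       = (cnj \<eta> ^ 3 * cnj \<alpha>) *m Emat 3 1 + (- (cnj \<eta> ^ 3 * \<beta>)) *m Emat 3 2"
    "kmat \<eta> \<alpha> \<beta> ** Emat 3 2 ** kmat (cnj \<eta>) (cnj \<alpha>) (- \<beta>)
       = (cnj \<eta> ^ 3 * cnj \<beta>) *m Emat 3 1 + (cnj \<eta> ^ 3 * \<alpha>) *m Emat 3 2"
    "kmat \<eta> \<alpha> \<beta> ** Emat 1 3 ** kmat (cnj \<eta>) (cnj \<alpha>) (- \<beta>)
       = (\<eta> ^ 3 * \<alpha>) *m Emat 1 3 + (- (\<eta> ^ 3 * cnj \<beta>)) *m Emat 2 3"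
    "kmat \<eta> \<alpha> \<beta> ** Emat 2 3 ** kmat (cnj \<eta>) (cnj \<alpha>) (- \<beta>)
       = (\<eta> ^ 3 * \<beta>) *m Emat 1 3 + (\<eta> ^ 3 * cnj \<alpha>) *m Emat 2 3"
proof -
  have e: "cnj \<eta> = inverse \<eta>" "\<eta> \<noteq> 0" using assms(1)
    by (auto simp: inverse_unique[of \<eta> "cnj \<eta>"])
  show "kmat \<eta> \<alpha> \<beta> ** Emat 3 1 ** kmat (cnj \<eta>) (cnj \<alpha>) (- \<beta>)
       = (cnj \<eta> ^ 3 * cnj \<alpha>) *m Emat 3 1 + (- (cnj \<eta> ^ 3 * \<beta>)) *m Emat 3 2"
    using e by (simp add: e kmat_def mat_simps field_simps power2_eq_square power3_eq_cube)
  show "kmat \<eta> \<alpha> \<beta> ** Emat 3 2 ** kmat (cnj \<eta>) (cnj \<alpha>) (- \<beta>)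
       = (cnj \<eta> ^ 3 * cnj \<beta>) *m Emat 3 1 + (cnj \<eta> ^ 3 * \<alpha>) *m Emat 3 2"
    using e by (simp add: e kmat_def mat_simps field_simps power2_eq_square power3_eq_cube)
  show "kmat \<eta> \<alpha> \<beta> ** Emat 1 3 ** kmat (cnj \<eta>) (cnj \<alpha>) (- \<beta>)
       = (\<eta> ^ 3 * \<alpha>) *m Emat 1 3 + (- (\<eta> ^ 3 * cnj \<beta>)) *m Emat 2 3"
    using e by (simp add: e kmat_def mat_simps field_simps power2_eq_square power3_eq_cube)
  show "kmat \<eta> \<alpha> \<beta> ** Emat 2 3 ** kmat (cnj \<eta>) (cnj \<alpha>) (- \<beta>)
       = (\<eta> ^ 3 * \<beta>) *m Emat 1 3 + (\<eta> ^ 3 * cnj \<alpha>) *m Emat 2 3"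
    using e by (simp add: e kmat_def mat_simps field_simps power2_eq_square power3_eq_cube)
qed

locale gkm =
  fixes J :: "'v::real_normed_vector \<Rightarrow> 'v" and gact kact :: "cmat \<Rightarrow> 'v \<Rightarrow> 'v"
  assumes gK: "gK_module J gact kact"

sublocale gkm \<subseteq> cstr J
  by (rule cstr.intro) (use gK in \<open>auto simp: gK_module_def\<close>)

lemma Kgrp_kmat: "cmod \<eta> = 1 \<Longrightarrow> (cmod \<alpha>)^2 + (cmod \<beta>)^2 = 1 \<Longrightarrow> kmat \<eta> \<alpha> \<beta> \<in> Kgrp"
  unfolding Kgrp_def by blast

lemma norm1_cnj: "cmod \<eta> = 1 \<Longrightarrow> \<eta> * cnj \<eta> = 1"
  using complex_norm_square[of \<eta>] by simp

lemma norm2_cnj: "(cmod \<alpha>)^2 + (cmod \<beta>)^2 = 1 \<Longrightarrow> \<alpha> * cnj \<alpha> + \<beta> * cnj \<beta> = 1"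
  using complex_norm_square[of \<alpha>] complex_norm_square[of \<beta>]
  by (metis of_real_1 of_real_add)

context gkm
begin

abbreviation G :: "3 \<Rightarrow> 3 \<Rightarrow> 'v \<Rightarrow> 'v" where "G i j \<equiv> gact (Emat i j)"

lemma g_clin: "X \<in> sl3 \<Longrightarrow> clin J (gact X)"
  using gK by (simp add: gK_module_def)
lemma g_lc: "X \<in> sl3 \<Longrightarrow> Y \<in> sl3 \<Longrightarrow> gact (a *m X + b *m Y) v = cscale J a (gact X v) + cscale J b (gact Y v)"
  using gK by (simp add: gK_module_def)
lemma g_br: "X \<in> sl3 \<Longrightarrow> Y \<in> sl3 \<Longrightarrow> gact (X ** Y - Y ** X) v = gact X (gact Y v) - gact Y (gact X v)"
  using gK by (simp add: gK_module_def)
lemma k_clin: "k \<in> Kgrp \<Longrightarrow> clin J (kact k)"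
  using gK by (simp add: gK_module_def)
lemma k_g: "k \<in> Kgrp \<Longrightarrow> X \<in> sl3 \<Longrightarrow> kact k (gact X v) = gact (k ** X ** matrix_inv k) (kact k v)"
  using gK by (simp add: gK_module_def)
lemma k_deriv: "(\<And>t. \<gamma> t \<in> Kgrp) \<Longrightarrow> \<gamma> 0 = mat 1 \<Longrightarrow> (\<gamma> has_vector_derivative X) (at 0) \<Longrightarrow>
   ((\<lambda>t. kact (\<gamma> t) v) has_vector_derivative gact X v) (at 0)"
  using gK unfolding gK_module_def by blast

lemma g_smul: "X \<in> sl3 \<Longrightarrow> gact (c *m X) v = cscale J c (gact X v)"
  using g_lc[of X X c 0 v] by simp
lemma g_plus: "X \<in> sl3 \<Longrightarrow> Y \<in> sl3 \<Longrightarrow> gact (X + Y) v = gact X v + gact Y v"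
  using g_lc[of X Y 1 1 v] by simp

lemma g_add: "X \<in> sl3 \<Longrightarrow> gact X (x + y) = gact X x + gact X y"
  using g_clin clin_add by blast
lemma g_diff: "X \<in> sl3 \<Longrightarrow> gact X (x - y) = gact X x - gact X y"
  using g_clin clin_diff by blast
lemma g_scaleR: "X \<in> sl3 \<Longrightarrow> gact X (r *\<^sub>R x) = r *\<^sub>R gact X x"
  using g_clin clin_scaleR by blast
lemma g_cs: "X \<in> sl3 \<Longrightarrow> gact X (cscale J c x) = cscale J c (gact X x)"
  using g_clin clin_cs by blast
lemma g_0: "X \<in> sl3 \<Longrightarrow> gact X 0 = 0"
  using g_clin clin_0 by blast
lemma g_neg: "X \<in> sl3 \<Longrightarrow> gact X (- x) = - gact X x"
  using g_clin clin_neg by blast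
lemma g_sum: "X \<in> sl3 \<Longrightarrow> gact X (sum f S) = (\<Sum>i\<in>S. gact X (f i))"
  using g_clin clin_sum by blast

lemmas g_lin = g_add g_diff g_scaleR g_cs g_0 g_neg

lemma k_add: "k \<in> Kgrp \<Longrightarrow> kact k (x + y) = kact k x + kact k y"
  using k_clin clin_add by blast
lemma k_cs: "k \<in> Kgrp \<Longrightarrow> kact k (cscale J c x) = cscale J c (kact k x)"
  using k_clin clin_cs by blast
lemma k_0: "k \<in> Kgrp \<Longrightarrow> kact k 0 = 0"
  using k_clin clin_0 by blast

lemma Ad_act:
  assumes "cmod \<eta> = 1" "(cmod \<alpha>)^2 + (cmod \<beta>)^2 = 1"
  shows "kact (kmat \<eta> \<alpha> \<beta>) (G 3 1 w) = cscale J (cnj \<eta> ^ 3 * cnj \<alpha>) (G 3 1 (kact (kmat \<eta> \<alpha> \<beta>) w))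
           + cscale J (- (cnj \<eta> ^ 3 * \<beta>)) (G 3 2 (kact (kmat \<eta> \<alpha> \<beta>) w))"
    "kact (kmat \<eta> \<alpha> \<beta>) (G 3 2 w) = cscale J (cnj \<eta> ^ 3 * cnj \<beta>) (G 3 1 (kact (kmat \<eta> \<alpha> \<beta>) w))
           + cscale J (cnj \<eta> ^ 3 * \<alpha>) (G 3 2 (kact (kmat \<eta> \<alpha> \<beta>) w))"
    "kact (kmat \<eta> \<alpha> \<beta>) (G 1 3 w) = cscale J (\<eta> ^ 3 * \<alpha>) (G 1 3 (kact (kmat \<eta> \<alpha> \<beta>) w))
           + cscale J (- (\<eta> ^ 3 * cnj \<beta>)) (G 2 3 (kact (kmat \<eta> \<alpha> \<beta>) w))"
    "kact (kmat \<eta> \<alpha> \<beta>) (G 2 3 w) = cscale J (\<eta> ^ 3 * \<beta>) (G 1 3 (kact (kmat \<eta> \<alpha> \<beta>) w))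
           + cscale J (\<eta> ^ 3 * cnj \<alpha>) (G 2 3 (kact (kmat \<eta> \<alpha> \<beta>) w))"
  using k_g[OF Kgrp_kmat[OF assms]]
    matrix_inv_kmat[OF norm1_cnj[OF assms(1)] norm2_cnj[OF assms(2)]] Ad_kmat[OF norm1_cnj[OF assms(1)]]
  by (simp_all add: g_lc sl3_Emat)

end

section \<open>Polynomials\<close>

definition hp :: "nat \<Rightarrow> (nat \<Rightarrow> complex) \<Rightarrow> complex \<times> complex \<Rightarrow> complex" where
  "hp n c = (\<lambda>z. \<Sum>j\<le>n. c j * fst z ^ j * snd z ^ (n - j))"

definition mnm :: "nat \<Rightarrow> nat \<Rightarrow> complex \<times> complex \<Rightarrow> complex" where
  "mnm n j = (\<lambda>z. fst z ^ j * snd z ^ (n - j))"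

lemma Ppoly_iff: "F \<in> Ppoly n \<longleftrightarrow> (\<exists>c. F = hp n c)"
  by (simp add: Ppoly_def hp_def)

lemma hp_in[simp]: "hp n c \<in> Ppoly n"
  by (auto simp: Ppoly_iff)

lemma mnm_hp: "j \<le> n \<Longrightarrow> mnm n j = hp n (\<lambda>i. if i = j then 1 else 0)"
  by (simp add: mnm_def hp_def if_distrib[where f="\<lambda>x. x * _"] cong: if_cong)

lemma mnm_in: "j \<le> n \<Longrightarrow> mnm n j \<in> Ppoly n"
  by (simp add: mnm_hp)

lemma hp_lincomb: "(\<lambda>z. a * hp n c z + b * hp n d z) = hp n (\<lambda>j. a * c j + b * d j)"
  by (simp add: hp_def fun_eq_iff sum_distrib_left sum.distrib[symmetric] algebra_simps)

lemma hp_smul: "(\<lambda>z. a * hp n c z) = hp n (\<lambda>j. a * c j)"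
  by (simp add: hp_def fun_eq_iff sum_distrib_left algebra_simps)

lemma hp_zero: "hp n (\<lambda>j. 0) = (\<lambda>z. 0)"
  by (simp add: hp_def)

lemma Ppoly_lincomb: "f \<in> Ppoly n \<Longrightarrow> g \<in> Ppoly n \<Longrightarrow> (\<lambda>z. a * f z + b * g z) \<in> Ppoly n"
  by (auto simp: Ppoly_iff hp_lincomb)

lemma Ppoly_smul: "f \<in> Ppoly n \<Longrightarrow> (\<lambda>z. a * f z) \<in> Ppoly n"
  by (auto simp: Ppoly_iff hp_smul)

lemma Ppoly_zero: "(\<lambda>z. 0) \<in> Ppoly n"
  using hp_in[of n "\<lambda>j. 0"] by (simp add: hp_zero)

context gkm
begin

lemma psi_lin: "\<psi> \<in> Khom J kact h n \<Longrightarrow> f \<in> Ppoly n \<Longrightarrow> g \<in> Ppoly n \<Longrightarrow>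
   \<psi> (\<lambda>z. a * f z + b * g z) = cscale J a (\<psi> f) + cscale J b (\<psi> g)"
  by (simp add: Khom_def)

lemma psi_smul: "\<psi> \<in> Khom J kact h n \<Longrightarrow> f \<in> Ppoly n \<Longrightarrow> \<psi> (\<lambda>z. a * f z) = cscale J a (\<psi> f)"
  using psi_lin[of \<psi> h n f f a 0] by simp

lemma psi_zero: "\<psi> \<in> Khom J kact h n \<Longrightarrow> \<psi> (\<lambda>z. 0) = 0"
  using psi_smul[of \<psi> h n "\<lambda>z. 0" 0] Ppoly_zero by simp

lemma psi_eq: "\<psi> \<in> Khom J kact h n \<Longrightarrow> cmod \<eta> = 1 \<Longrightarrow> (cmod \<alpha>)^2 + (cmod \<beta>)^2 = 1 \<Longrightarrow> f \<in> Ppoly n \<Longrightarrow>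
   \<psi> (\<lambda>z. \<eta> powi (- h) * tau \<alpha> \<beta> f z) = kact (kmat \<eta> \<alpha> \<beta>) (\<psi> f)"
  by (simp add: Khom_def)

lemma psi_hp:
  assumes "\<psi> \<in> Khom J kact h n"
  shows "\<psi> (hp n c) = (\<Sum>j\<le>n. cscale J (c j) (\<psi> (mnm n j)))"
proof -
  have main: "finite S \<Longrightarrow> S \<subseteq> {..n} \<Longrightarrow> \<psi> (hp n (\<lambda>j. if j \<in> S then c j else 0)) = (\<Sum>j\<in>S. cscale J (c j) (\<psi> (mnm n j)))" for S
  proof (induction S rule: finite_induct)
    case empty
    then show ?case using psi_zero[OF assms] by (simp add: hp_zero)
  next
    case (insert x S)
    have "hp n (\<lambda>j. if j \<in> insert x S then c j else 0)
        = hp n (\<lambda>j. c x * (if j = x then 1 else 0) + 1 * (if j \<in> S then c j else 0))"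
      by (rule arg_cong[where f="hp n"]) (use insert in auto)
    also have "\<dots> = (\<lambda>z. c x * mnm n x z + 1 * hp n (\<lambda>j. if j \<in> S then c j else 0) z)"
      using insert(4) by (simp only: hp_lincomb[symmetric]) (simp add: mnm_hp)
    finally have eq: "hp n (\<lambda>j. if j \<in> insert x S then c j else 0)
        = (\<lambda>z. c x * mnm n x z + 1 * hp n (\<lambda>j. if j \<in> S then c j else 0) z)" .
    have "\<psi> (hp n (\<lambda>j. if j \<in> insert x S then c j else 0)) = \<psi> (\<lambda>z. c x * mnm n x z + 1 * hp n (\<lambda>j. if j \<in> S then c j else 0) z)"
      using eq by (rule arg_cong)
    also have "\<dots> = cscale J (c x) (\<psi> (mnm n x)) + cscale J 1 (\<psi> (hp n (\<lambda>j. if j \<in> S then c j else 0)))"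
      using insert(4) by (intro psi_lin[OF assms mnm_in hp_in]) auto
    also have "\<dots> = (\<Sum>j\<in>insert x S. cscale J (c j) (\<psi> (mnm n j)))"
      using insert(1,2,4) insert.IH by simp
    finally show ?case .
  qed
  have eq: "hp n (\<lambda>j. if j \<in> {..n} then c j else 0) = hp n c"
    unfolding hp_def by (intro ext sum.cong) auto
  show ?thesis using main[of "{..n}"] unfolding eq by simp
qed

lemma Khom_zero: "(\<lambda>f. 0) \<in> Khom J kact h n"
  by (simp add: Khom_def k_0 Kgrp_kmat)

lemma Khom_add: "\<psi>1 \<in> Khom J kact h n \<Longrightarrow> \<psi>2 \<in> Khom J kact h n \<Longrightarrow> (\<lambda>f. \<psi>1 f + \<psi>2 f) \<in> Khom J kact h n"
  by (simp add: Khom_def k_add Kgrp_kmat cs_add_right)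

lemma Khom_cs: "\<psi> \<in> Khom J kact h n \<Longrightarrow> (\<lambda>f. cscale J a (\<psi> f)) \<in> Khom J kact h n"
  by (simp add: Khom_def k_cs Kgrp_kmat cs_add_right cs_mult mult.commute)

lemma decomp:
  assumes "v \<in> Viso J kact h n"
  shows "\<exists>\<psi>s. (\<forall>j\<le>n. \<psi>s j \<in> Khom J kact h n) \<and> v = (\<Sum>j\<le>n. \<psi>s j (mnm n j))"
  using assms unfolding Viso_def
proof (induction rule: real_vector.span_induct_alt)
  case base
  show ?case by (rule exI[of _ "\<lambda>j f. 0"]) (simp add: Khom_zero)
next
  case (step r x y)
  from step(1) obtain \<phi> F where \<phi>: "\<phi> \<in> Khom J kact h n" "F \<in> Ppoly n" "x = \<phi> F" by blast
  from \<phi>(2) obtain cF where F: "F = hp n cF" by (auto simp: Ppoly_iff)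
  from step(2) obtain \<psi>s where \<psi>s0: "(\<forall>j\<le>n. \<psi>s j \<in> Khom J kact h n) \<and> y = (\<Sum>j\<le>n. \<psi>s j (mnm n j))" ..
  note \<psi>s = conjunct1[OF \<psi>s0] conjunct2[OF \<psi>s0]
  let ?\<psi> = "\<lambda>j f. cscale J (of_real r * cF j) (\<phi> f) + \<psi>s j f"
  have "\<forall>j\<le>n. ?\<psi> j \<in> Khom J kact h n"
  proof (intro allI impI)
    fix j assume "j \<le> n"
    show "?\<psi> j \<in> Khom J kact h n"
      using Khom_add[OF Khom_cs[OF \<phi>(1)] \<psi>s(1)[rule_format, OF \<open>j \<le> n\<close>]] .
  qed
  moreover have "r *\<^sub>R x + y = (\<Sum>j\<le>n. ?\<psi> j (mnm n j))"
    using \<phi>(3) F psi_hp[OF \<phi>(1)] \<psi>s(2)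
    by (simp add: sum.distrib scaleR_sum_right cs_of_real_mult)
  ultimately have "(\<forall>j\<le>n. ?\<psi> j \<in> Khom J kact h n) \<and> r *\<^sub>R x + y = (\<Sum>j\<le>n. ?\<psi> j (mnm n j))"
    by (rule conjI)
  then show ?case by (intro exI[where x="?\<psi>"])
qed

end

context cstr
begin

lemma eigen_proj:
  fixes n :: nat and lam :: "nat \<Rightarrow> complex" and w :: "nat \<Rightarrow> 'v"
  assumes T: "clin J T"
  shows "(\<forall>j k. j \<le> n \<longrightarrow> k \<le> n \<longrightarrow> lam j = lam k \<longrightarrow> j = k) \<longrightarrow>
    (\<forall>j\<le>n. T (w j) = cscale J (lam j) (w j)) \<longrightarrow>
    T (\<Sum>j\<le>n. w j) = cscale J (lam 0) (\<Sum>j\<le>n. w j) \<longrightarrow> (\<Sum>j\<le>n. w j) = w 0"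
proof (induction n arbitrary: w)
  case 0
  then show ?case by simp
next
  case (Suc n)
  show ?case
  proof (intro impI)
    assume inj: "\<forall>j k. j \<le> Suc n \<longrightarrow> k \<le> Suc n \<longrightarrow> lam j = lam k \<longrightarrow> j = k"
      and eig: "\<forall>j\<le>Suc n. T (w j) = cscale J (lam j) (w j)"
      and ev: "T (\<Sum>j\<le>Suc n. w j) = cscale J (lam 0) (\<Sum>j\<le>Suc n. w j)"
    define v where "v = (\<Sum>j\<le>Suc n. w j)"
    define d where "d = lam 0 - lam (Suc n)"
    have d0: "d \<noteq> 0" using inj unfolding d_def by force
    define w' where "w' j = cscale J (inverse d * (lam j - lam (Suc n))) (w j)" for j
    have Tv: "T v = (\<Sum>j\<le>Suc n. cscale J (lam j) (w j))"
      unfolding v_def clin_sum[OF T] using eig by (intro sum.cong) auto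
    have "T v - cscale J (lam (Suc n)) v = (\<Sum>j\<le>Suc n. cscale J (lam j) (w j)) - cscale J (lam (Suc n)) v"
      by (simp only: Tv)
    also have "\<dots> = (\<Sum>j\<le>Suc n. cscale J (lam j - lam (Suc n)) (w j))"
      unfolding v_def cs_sum sum_subtractf[symmetric] by (intro sum.cong) (auto simp: cs_diff_left)
    also have "\<dots> = (\<Sum>j\<le>n. cscale J (lam j - lam (Suc n)) (w j))"
      by simp
    finally have e1: "T v - cscale J (lam (Suc n)) v = (\<Sum>j\<le>n. cscale J (lam j - lam (Suc n)) (w j))" .
    have "T v - cscale J (lam (Suc n)) v = cscale J d v"
      using ev unfolding v_def[symmetric] d_def by (simp add: cs_diff_left)
    with e1 have "cscale J d v = (\<Sum>j\<le>n. cscale J (lam j - lam (Suc n)) (w j))" by simp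
    then have "cscale J (inverse d) (cscale J d v) = (\<Sum>j\<le>n. w' j)"
      by (simp add: w'_def cs_sum cs_mult)
    then have vw: "v = (\<Sum>j\<le>n. w' j)" using d0 by (simp add: cs_mult)
    have inj': "\<forall>j k. j \<le> n \<longrightarrow> k \<le> n \<longrightarrow> lam j = lam k \<longrightarrow> j = k" using inj by simp
    have eig': "\<forall>j\<le>n. T (w' j) = cscale J (lam j) (w' j)"
      using eig by (simp add: w'_def clin_cs[OF T] cs_mult mult.commute mult.left_commute)
    have ev': "T (\<Sum>j\<le>n. w' j) = cscale J (lam 0) (\<Sum>j\<le>n. w' j)"
      using ev unfolding v_def[symmetric] vw .
    have "(\<Sum>j\<le>n. w' j) = w' 0" using Suc.IH[of w'] inj' eig' ev' by blast
    then show "(\<Sum>j\<le>Suc n. w j) = w 0"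
      using d0 unfolding v_def[symmetric] vw by (simp add: w'_def d_def[symmetric])
  qed
qed

end

section \<open>Derivatives\<close>

lemma linear_msc: "linear (\<lambda>c. c *m X)"
  by (rule linearI) (simp_all add: msc_def vec_eq_iff algebra_simps)

lemma msc_vd: "(f has_vector_derivative f') F \<Longrightarrow> ((\<lambda>t. f t *m X) has_vector_derivative (f' *m X)) F"
  using bounded_linear.has_vector_derivative[OF linear_msc[unfolded linear_conv_bounded_linear]] .

lemma kmat1_eq: "kmat 1 a b = a *m Emat 1 1 + b *m Emat 1 2 + (- cnj b) *m Emat 2 1 + cnj a *m Emat 2 2 + 1 *m Emat 3 3"
  by (simp add: kmat_def)

lemma kmat1_vd:
  assumes "(\<alpha> has_vector_derivative a') (at 0)" "(\<beta> has_vector_derivative b') (at 0)"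
  shows "((\<lambda>t. kmat 1 (\<alpha> t) (\<beta> t)) has_vector_derivative
     (a' *m Emat 1 1 + b' *m Emat 1 2 + (- cnj b') *m Emat 2 1 + cnj a' *m Emat 2 2)) (at 0)"
proof -
  have "((\<lambda>t. \<alpha> t *m Emat 1 1 + \<beta> t *m Emat 1 2 + (- cnj (\<beta> t)) *m Emat 2 1 + cnj (\<alpha> t) *m Emat 2 2 + 1 *m Emat 3 3)
      has_vector_derivative (a' *m Emat 1 1 + b' *m Emat 1 2 + (- cnj b') *m Emat 2 1 + cnj a' *m Emat 2 2 + 0)) (at 0)"
    by (intro has_vector_derivative_add msc_vd has_vector_derivative_minus has_vector_derivative_cnj assms
        has_vector_derivative_const)
  then show ?thesis by (simp add: kmat1_eq)
qed

lemma cis_eq: "cis t = complex_of_real (cos t) + \<i> * complex_of_real (sin t)"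
  by (simp add: complex_eq_iff)

lemma cis_vd: "((\<lambda>t. cis t) has_vector_derivative \<i>) (at 0)"
proof -
  have "((\<lambda>t. complex_of_real (cos t) + \<i> * complex_of_real (sin t)) has_vector_derivative
      (complex_of_real (- sin 0) + \<i> * complex_of_real (cos 0))) (at 0)"
    by (intro has_vector_derivative_add has_vector_derivative_mult_right has_vector_derivative_of_real
        DERIV_cos DERIV_sin)
  then show ?thesis by (simp add: cis_eq[abs_def])
qed

lemma of_real_vd: "(f has_real_derivative D) (at 0) \<Longrightarrow> ((\<lambda>t. complex_of_real (f t)) has_vector_derivative of_real D) (at 0)"
  by (rule has_vector_derivative_of_real)

lemma bin_coef_deriv:
  "((\<lambda>t. real (n choose k) * sin t ^ k * cos t ^ (n - k)) has_real_derivative (if k = 1 then real n else 0)) (at 0)"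
proof -
  have "((\<lambda>t. real (n choose k) * sin t ^ k * cos t ^ (n - k)) has_real_derivative
     real (n choose k) * (real k * sin 0 ^ (k - 1) * cos 0) * cos 0 ^ (n - k)
     + real (n choose k) * sin 0 ^ k * (real (n - k) * cos 0 ^ (n - k - 1) * (- sin 0))) (at 0)"
    by (auto intro!: derivative_eq_intros simp: algebra_simps)
  moreover have "real (n choose k) * (real k * sin 0 ^ (k - 1) * cos 0) * cos 0 ^ (n - k)
     + real (n choose k) * sin 0 ^ k * (real (n - k) * cos 0 ^ (n - k - 1) * (- sin 0)) = (if k = 1 then real n else 0)"
    by (cases k) (auto simp: power_0_left)
  ultimately show ?thesis by simp
qed

lemma bin_deriv:
  fixes w :: "nat \<Rightarrow> 'v::real_normed_vector"
  shows "((\<lambda>t. \<Sum>k\<le>n. (real (n choose k) * sin t ^ k * cos t ^ (n - k)) *\<^sub>R w k) has_vector_derivative (real n *\<^sub>R w 1)) (at 0)"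
proof -
  have "((\<lambda>t. \<Sum>k\<le>n. (real (n choose k) * sin t ^ k * cos t ^ (n - k)) *\<^sub>R w k) has_vector_derivative
     (\<Sum>k\<le>n. (real (n choose k) * sin 0 ^ k * cos 0 ^ (n - k)) *\<^sub>R 0 + (if k = 1 then real n else 0) *\<^sub>R w k)) (at 0)"
    by (intro has_vector_derivative_sum has_vector_derivative_scaleR bin_coef_deriv has_vector_derivative_const)
  moreover have "(\<Sum>k\<le>n. (real (n choose k) * sin 0 ^ k * cos 0 ^ (n - k)) *\<^sub>R (0::'v) + (if k = 1 then real n else 0) *\<^sub>R w k)
      = real n *\<^sub>R w 1"
    by (cases n) (auto simp: if_distrib[where f="\<lambda>x. x *\<^sub>R _"] sum.delta cong: if_cong)
  ultimately show ?thesis by simp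
qed


lemma cs_half: "cstr J \<Longrightarrow> cscale J (1/2) v = (1/2) *\<^sub>R v"
  by (simp add: cscale_def)

context gkm
begin

lemma W0_mat: "\<i> *m Emat 1 1 + 0 *m Emat 1 2 + (- cnj 0) *m Emat 2 1 + cnj \<i> *m Emat 2 2 = W0"
  by (auto simp: W0_def mat_simps)

lemma W0_act:
  assumes \<psi>: "\<psi> \<in> Khom J kact h n" and j: "j \<le> n"
  shows "gact W0 (\<psi> (mnm n j)) = cscale J (\<i> * (of_nat j - of_nat (n - j))) (\<psi> (mnm n j))"
proof -
  let ?w = "\<psi> (mnm n j)"
  define k where "k = real j - real (n - j)"
  have K: "\<And>t. kmat 1 (cis t) 0 \<in> Kgrp" by (rule Kgrp_kmat) simp_all
  have g0: "kmat 1 (cis 0) 0 = mat 1" using kmat_one by simp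
  have gd: "((\<lambda>t. kmat 1 (cis t) 0) has_vector_derivative W0) (at 0)"
    using kmat1_vd[OF cis_vd has_vector_derivative_const[of 0]] unfolding W0_mat .
  from k_deriv[of "\<lambda>t. kmat 1 (cis t) 0", OF K g0 gd]
  have D1: "((\<lambda>t. kact (kmat 1 (cis t) 0) ?w) has_vector_derivative gact W0 ?w) (at 0)" .
  have eq: "kact (kmat 1 (cis t) 0) ?w = cos (k*t) *\<^sub>R ?w + sin (k*t) *\<^sub>R J ?w" for t
  proof -
    have "kact (kmat 1 (cis t) 0) ?w = \<psi> (\<lambda>z. 1 powi (-h) * tau (cis t) 0 (mnm n j) z)"
      using psi_eq[OF \<psi>, of 1 "cis t" 0] mnm_in[OF j] by simp
    also have "(\<lambda>z. 1 powi (-h) * tau (cis t) 0 (mnm n j) z) = (\<lambda>z. cis (k*t) * mnm n j z)"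
    proof -
      have "cis t ^ j * cnj (cis t) ^ (n - j) = cis (k * t)"
        by (simp only: cis_cnj Complex.DeMoivre cis_mult k_def) (rule arg_cong[where f=cis], simp add: algebra_simps)
      then show ?thesis
        by (auto simp: tau_def mnm_def fun_eq_iff power_mult_distrib mult_ac)
    qed
    also have "\<psi> (\<lambda>z. cis (k*t) * mnm n j z) = cscale J (cis (k*t)) ?w"
      by (rule psi_smul[OF \<psi> mnm_in[OF j]])
    also have "\<dots> = cos (k*t) *\<^sub>R ?w + sin (k*t) *\<^sub>R J ?w" by (simp add: cscale_def)
    finally show ?thesis .
  qed
  have dc: "((\<lambda>t. cos (k*t)) has_real_derivative 0) (at 0)"
    by (auto intro!: derivative_eq_intros)
  have ds: "((\<lambda>t. sin (k*t)) has_real_derivative k) (at 0)"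
    by (auto intro!: derivative_eq_intros)
  have D2: "((\<lambda>t. cos (k*t) *\<^sub>R ?w + sin (k*t) *\<^sub>R J ?w) has_vector_derivative (k *\<^sub>R J ?w)) (at 0)"
    using has_vector_derivative_add[OF has_vector_derivative_scaleR[OF dc has_vector_derivative_const]
        has_vector_derivative_scaleR[OF ds has_vector_derivative_const]]
    by simp
  have "gact W0 ?w = k *\<^sub>R J ?w"
    using vector_derivative_unique_at[OF D1[unfolded eq] D2] .
  then show ?thesis by (simp add: cscale_def k_def)
qed

lemma A_mat: "0 *m Emat 1 1 + 1 *m Emat 1 2 + (- cnj 1) *m Emat 2 1 + cnj 0 *m Emat 2 2 = Emat 1 2 - Emat 2 1"
  by (auto simp: mat_simps)

lemma B_mat: "0 *m Emat 1 1 + \<i> *m Emat 1 2 + (- cnj \<i>) *m Emat 2 1 + cnj 0 *m Emat 2 2 = \<i> *m Emat 1 2 + \<i> *m Emat 2 1"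
  by (auto simp: mat_simps)

lemma A_act:
  assumes \<psi>: "\<psi> \<in> Khom J kact h n"
  shows "gact (Emat 1 2 - Emat 2 1) (\<psi> (mnm n 0)) = real n *\<^sub>R \<psi> (mnm n 1)"
proof -
  let ?w = "\<psi> (mnm n 0)"
  let ?g = "\<lambda>t. kmat 1 (complex_of_real (cos t)) (complex_of_real (sin t))"
  let ?r = "\<lambda>k t. real (n choose k) * sin t ^ k * cos t ^ (n - k)"
  have K: "\<And>t. ?g t \<in> Kgrp" by (rule Kgrp_kmat) simp_all
  have g0: "?g 0 = mat 1" using kmat_one by simp
  have gd: "(?g has_vector_derivative (Emat 1 2 - Emat 2 1)) (at 0)"
    using kmat1_vd[OF of_real_vd[OF DERIV_cos] of_real_vd[OF DERIV_sin]] unfolding A_mat[symmetric] by simp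
  from k_deriv[of ?g, OF K g0 gd]
  have D1: "((\<lambda>t. kact (?g t) ?w) has_vector_derivative gact (Emat 1 2 - Emat 2 1) ?w) (at 0)" .
  have eq: "kact (?g t) ?w = (\<Sum>k\<le>n. ?r k t *\<^sub>R \<psi> (mnm n k))" for t
  proof -
    have "kact (?g t) ?w = \<psi> (\<lambda>z. 1 powi (-h) * tau (of_real (cos t)) (of_real (sin t)) (mnm n 0) z)"
      using psi_eq[OF \<psi>, of 1 "of_real (cos t)" "of_real (sin t)"] mnm_in[of 0 n] by simp
    also have "(\<lambda>z. 1 powi (-h) * tau (of_real (cos t)) (of_real (sin t)) (mnm n 0) z) = hp n (\<lambda>k. of_real (?r k t))"
      by (simp add: tau_def mnm_def hp_def fun_eq_iff binomial_ring power_mult_distrib mult_ac)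
    also have "\<psi> (hp n (\<lambda>k. of_real (?r k t))) = (\<Sum>k\<le>n. ?r k t *\<^sub>R \<psi> (mnm n k))"
      by (simp only: psi_hp[OF \<psi>] cs_of_real)
    finally show ?thesis .
  qed
  show ?thesis
    using vector_derivative_unique_at[OF D1[unfolded eq] bin_deriv] .
qed

lemma B_act:
  assumes \<psi>: "\<psi> \<in> Khom J kact h n"
  shows "gact (\<i> *m Emat 1 2 + \<i> *m Emat 2 1) (\<psi> (mnm n 0)) = real n *\<^sub>R cscale J \<i> (\<psi> (mnm n 1))"
proof -
  let ?w = "\<psi> (mnm n 0)"
  let ?g = "\<lambda>t. kmat 1 (complex_of_real (cos t)) (\<i> * complex_of_real (sin t))"
  let ?r = "\<lambda>k t. real (n choose k) * sin t ^ k * cos t ^ (n - k)"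
  have K: "\<And>t. ?g t \<in> Kgrp" by (rule Kgrp_kmat) (simp_all add: norm_mult)
  have g0: "?g 0 = mat 1" using kmat_one by simp
  have gd: "(?g has_vector_derivative (\<i> *m Emat 1 2 + \<i> *m Emat 2 1)) (at 0)"
    using kmat1_vd[OF of_real_vd[OF DERIV_cos] has_vector_derivative_mult_right[OF of_real_vd[OF DERIV_sin]], of \<i>]
    unfolding B_mat[symmetric] by simp
  from k_deriv[of ?g, OF K g0 gd]
  have D1: "((\<lambda>t. kact (?g t) ?w) has_vector_derivative gact (\<i> *m Emat 1 2 + \<i> *m Emat 2 1) ?w) (at 0)" .
  have eq: "kact (?g t) ?w = (\<Sum>k\<le>n. ?r k t *\<^sub>R cscale J (\<i> ^ k) (\<psi> (mnm n k)))" for t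
  proof -
    have "kact (?g t) ?w = \<psi> (\<lambda>z. 1 powi (-h) * tau (of_real (cos t)) (\<i> * of_real (sin t)) (mnm n 0) z)"
      using psi_eq[OF \<psi>, of 1 "of_real (cos t)" "\<i> * of_real (sin t)"] mnm_in[of 0 n] by (simp add: norm_mult)
    also have "(\<lambda>z. 1 powi (-h) * tau (of_real (cos t)) (\<i> * of_real (sin t)) (mnm n 0) z) = hp n (\<lambda>k. of_real (?r k t) * \<i> ^ k)"
      by (simp add: tau_def mnm_def hp_def fun_eq_iff binomial_ring power_mult_distrib mult_ac)
    also have "\<psi> (hp n (\<lambda>k. of_real (?r k t) * \<i> ^ k)) = (\<Sum>k\<le>n. ?r k t *\<^sub>R cscale J (\<i> ^ k) (\<psi> (mnm n k)))"
      by (simp only: psi_hp[OF \<psi>] cs_of_real_mult)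
    finally show ?thesis .
  qed
  show ?thesis
    using vector_derivative_unique_at[OF D1[unfolded eq] bin_deriv] by simp
qed


lemma A_sl3: "Emat 1 2 - Emat 2 1 \<in> sl3" by (simp add: sl3_diff sl3_Emat)
lemma B_sl3: "\<i> *m Emat 1 2 + \<i> *m Emat 2 1 \<in> sl3" by (simp add: sl3_add sl3_msc sl3_Emat)

lemma E12_mat: "Emat 1 2 = (1/2) *m (Emat 1 2 - Emat 2 1) + (-\<i>/2) *m (\<i> *m Emat 1 2 + \<i> *m Emat 2 1)"
  by (auto simp: mat_simps)
lemma E21_mat: "Emat 2 1 = (-1/2) *m (Emat 1 2 - Emat 2 1) + (-\<i>/2) *m (\<i> *m Emat 1 2 + \<i> *m Emat 2 1)"
  by (auto simp: mat_simps)

lemma E12_act: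
  assumes \<psi>: "\<psi> \<in> Khom J kact h n"
  shows "G 1 2 (\<psi> (mnm n 0)) = real n *\<^sub>R \<psi> (mnm n 1)"
proof -
  have "G 1 2 (\<psi> (mnm n 0)) = gact ((1/2) *m (Emat 1 2 - Emat 2 1) + (-\<i>/2) *m (\<i> *m Emat 1 2 + \<i> *m Emat 2 1)) (\<psi> (mnm n 0))"
    by (rule arg_cong[where f="\<lambda>X. gact X (\<psi> (mnm n 0))", OF E12_mat])
  also have "\<dots> = cscale J (1/2) (real n *\<^sub>R \<psi> (mnm n 1)) + cscale J (-\<i>/2) (real n *\<^sub>R cscale J \<i> (\<psi> (mnm n 1)))"
    by (simp only: g_lc[OF A_sl3 B_sl3] A_act[OF \<psi>] B_act[OF \<psi>])
  also have "\<dots> = real n *\<^sub>R \<psi> (mnm n 1)"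
    by (simp add: cs_scaleR cs_mult cs_half[OF cstr_axioms] scaleR_add_left[symmetric])
  finally show ?thesis .
qed

lemma E21_act:
  assumes \<psi>: "\<psi> \<in> Khom J kact h n"
  shows "G 2 1 (\<psi> (mnm n 0)) = 0"
proof -
  have "G 2 1 (\<psi> (mnm n 0)) = gact ((-1/2) *m (Emat 1 2 - Emat 2 1) + (-\<i>/2) *m (\<i> *m Emat 1 2 + \<i> *m Emat 2 1)) (\<psi> (mnm n 0))"
    by (rule arg_cong[where f="\<lambda>X. gact X (\<psi> (mnm n 0))", OF E21_mat])
  also have "\<dots> = cscale J (-1/2) (real n *\<^sub>R \<psi> (mnm n 1)) + cscale J (-\<i>/2) (real n *\<^sub>R cscale J \<i> (\<psi> (mnm n 1)))"
    by (simp only: g_lc[OF A_sl3 B_sl3] A_act[OF \<psi>] B_act[OF \<psi>])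
  also have "\<dots> = 0"
    by (simp add: cs_scaleR cs_mult cs_neg_left cs_half[OF cstr_axioms])
  finally show ?thesis .
qed

lemma Vhpp_hw:
  assumes "v \<in> Vhpp J gact kact h (int n)"
  shows "\<exists>\<psi>. \<psi> \<in> Khom J kact h n \<and> v = \<psi> (mnm n 0)"
proof -
  have v: "v \<in> Viso J kact h n" "gact W0 v = cscale J (- \<i> * of_nat n) v"
    using assms by (simp_all add: Vhpp_def)
  obtain \<psi>s where \<psi>s: "\<forall>j\<le>n. \<psi>s j \<in> Khom J kact h n" and vs: "v = (\<Sum>j\<le>n. \<psi>s j (mnm n j))"
    using decomp[OF v(1)] by blast
  define lam where "lam j = \<i> * (of_nat j - of_nat (n - j))" for j
  have inj: "\<forall>j k. j \<le> n \<longrightarrow> k \<le> n \<longrightarrow> lam j = lam k \<longrightarrow> j = k"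
  proof (intro allI impI)
    fix j k assume jk: "j \<le> n" "k \<le> n" "lam j = lam k"
    then have "(of_nat j - of_nat (n - j) :: complex) = of_nat k - of_nat (n - k)"
      by (simp add: lam_def)
    then have "(of_nat (2 * j) :: complex) = of_nat (2 * k)"
      using jk by (simp add: of_nat_diff algebra_simps)
    then show "j = k" by (simp only: of_nat_eq_iff)
  qed
  have eig: "\<forall>j\<le>n. gact W0 (\<psi>s j (mnm n j)) = cscale J (lam j) (\<psi>s j (mnm n j))"
  proof (intro allI impI)
    fix j assume j: "j \<le> n"
    show "gact W0 (\<psi>s j (mnm n j)) = cscale J (lam j) (\<psi>s j (mnm n j))"
      unfolding lam_def using W0_act[OF \<psi>s[rule_format, OF j] j] .
  qed
  have ev: "gact W0 (\<Sum>j\<le>n. \<psi>s j (mnm n j)) = cscale J (lam 0) (\<Sum>j\<le>n. \<psi>s j (mnm n j))"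
    using v(2) unfolding vs by (simp add: lam_def)
  have "(\<Sum>j\<le>n. \<psi>s j (mnm n j)) = \<psi>s 0 (mnm n 0)"
    using eigen_proj[OF g_clin[OF sl3_W0], of n lam "\<lambda>j. \<psi>s j (mnm n j)"] inj eig ev by blast
  then show ?thesis using \<psi>s vs by auto
qed

lemma hw_in_Vhpp:
  assumes \<Psi>: "\<Psi> \<in> Khom J kact h n"
  shows "r *\<^sub>R \<Psi> (mnm n 0) \<in> Vhpp J gact kact h (int n)"
proof -
  have "\<Psi> (mnm n 0) \<in> (\<Union>\<phi>\<in>Khom J kact h n. \<phi> ` Ppoly n)"
    using \<Psi> mnm_in[of 0 n] by blast
  then have "r *\<^sub>R \<Psi> (mnm n 0) \<in> Viso J kact h n"
    unfolding Viso_def by (intro real_vector.span_scale real_vector.span_base)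
  moreover have "gact W0 (r *\<^sub>R \<Psi> (mnm n 0)) = cscale J (- \<i> * of_int (int n)) (r *\<^sub>R \<Psi> (mnm n 0))"
    using W0_act[OF \<Psi>, of 0] by (simp add: g_scaleR[OF sl3_W0] cs_scaleR)
  ultimately show ?thesis by (simp add: Vhpp_def)
qed

end

section \<open>Partial derivatives of polynomials\<close>

definition D1 :: "(complex \<times> complex \<Rightarrow> complex) \<Rightarrow> complex \<times> complex \<Rightarrow> complex" where
  "D1 F = (\<lambda>z. deriv (\<lambda>s. F (s, snd z)) (fst z))"
definition D2 :: "(complex \<times> complex \<Rightarrow> complex) \<Rightarrow> complex \<times> complex \<Rightarrow> complex" where
  "D2 F = (\<lambda>z. deriv (\<lambda>s. F (fst z, s)) (snd z))"

definition hpD1 :: "nat \<Rightarrow> (nat \<Rightarrow> complex) \<Rightarrow> complex \<times> complex \<Rightarrow> complex" where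
  "hpD1 n c = (\<lambda>z. \<Sum>j\<le>n. c j * of_nat j * fst z ^ (j - 1) * snd z ^ (n - j))"
definition hpD2 :: "nat \<Rightarrow> (nat \<Rightarrow> complex) \<Rightarrow> complex \<times> complex \<Rightarrow> complex" where
  "hpD2 n c = (\<lambda>z. \<Sum>j\<le>n. c j * of_nat (n - j) * fst z ^ j * snd z ^ (n - j - 1))"

lemma deriv_gen:
  "((\<lambda>s. \<Sum>j\<le>n. c j * (a1 * s + b1) ^ j * (a2 * s + b2) ^ (n - j)) has_field_derivative
    (\<Sum>j\<le>n. c j * (of_nat j * (a1 * s0 + b1) ^ (j - 1) * a1 * (a2 * s0 + b2) ^ (n - j)
        + (a1 * s0 + b1) ^ j * (of_nat (n - j) * (a2 * s0 + b2) ^ (n - j - 1) * a2)))) (at s0)"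
  by (intro DERIV_sum) (auto intro!: derivative_eq_intros simp: algebra_simps)

lemma deriv_gen':
  "deriv (\<lambda>s. \<Sum>j\<le>n. c j * (a1 * s + b1) ^ j * (a2 * s + b2) ^ (n - j)) s0 =
    a1 * (\<Sum>j\<le>n. c j * of_nat j * (a1 * s0 + b1) ^ (j - 1) * (a2 * s0 + b2) ^ (n - j))
  + a2 * (\<Sum>j\<le>n. c j * of_nat (n - j) * (a1 * s0 + b1) ^ j * (a2 * s0 + b2) ^ (n - j - 1))"
proof -
  have "deriv (\<lambda>s. \<Sum>j\<le>n. c j * (a1 * s + b1) ^ j * (a2 * s + b2) ^ (n - j)) s0 =
    (\<Sum>j\<le>n. c j * (of_nat j * (a1 * s0 + b1) ^ (j - 1) * a1 * (a2 * s0 + b2) ^ (n - j)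
        + (a1 * s0 + b1) ^ j * (of_nat (n - j) * (a2 * s0 + b2) ^ (n - j - 1) * a2)))"
    by (rule DERIV_imp_deriv[OF deriv_gen])
  also have "\<dots> = a1 * (\<Sum>j\<le>n. c j * of_nat j * (a1 * s0 + b1) ^ (j - 1) * (a2 * s0 + b2) ^ (n - j))
  + a2 * (\<Sum>j\<le>n. c j * of_nat (n - j) * (a1 * s0 + b1) ^ j * (a2 * s0 + b2) ^ (n - j - 1))"
    unfolding sum_distrib_left sum.distrib[symmetric] by (intro sum.cong refl) (simp add: algebra_simps)
  finally show ?thesis .
qed

lemma D1_hp: "D1 (hp n c) = hpD1 n c"
proof
  fix z :: "complex \<times> complex"
  have "(\<lambda>s. hp n c (s, snd z)) = (\<lambda>s. \<Sum>j\<le>n. c j * (1 * s + 0) ^ j * (0 * s + snd z) ^ (n - j))"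
    by (simp only: hp_def) simp
  then have "D1 (hp n c) z = deriv (\<lambda>s. \<Sum>j\<le>n. c j * (1 * s + 0) ^ j * (0 * s + snd z) ^ (n - j)) (fst z)"
    by (simp only: D1_def)
  also have "\<dots> = hpD1 n c z"
    by (simp only: deriv_gen') (simp add: hpD1_def)
  finally show "D1 (hp n c) z = hpD1 n c z" .
qed

lemma D2_hp: "D2 (hp n c) = hpD2 n c"
proof
  fix z :: "complex \<times> complex"
  have "(\<lambda>s. hp n c (fst z, s)) = (\<lambda>s. \<Sum>j\<le>n. c j * (0 * s + fst z) ^ j * (1 * s + 0) ^ (n - j))"
    by (simp only: hp_def) simp
  then have "D2 (hp n c) z = deriv (\<lambda>s. \<Sum>j\<le>n. c j * (0 * s + fst z) ^ j * (1 * s + 0) ^ (n - j)) (snd z)"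
    by (simp only: D2_def)
  also have "\<dots> = hpD2 n c z"
    by (simp only: deriv_gen') (simp add: hpD2_def)
  finally show "D2 (hp n c) z = hpD2 n c z" .
qed

lemma D1_tau: "D1 (\<lambda>z. \<kappa> * tau \<alpha> \<beta> (hp n c) z) =
   (\<lambda>z. \<kappa> * (\<alpha> * tau \<alpha> \<beta> (hpD1 n c) z + \<beta> * tau \<alpha> \<beta> (hpD2 n c) z))"
proof
  fix z :: "complex \<times> complex"
  have "(\<lambda>s. \<kappa> * tau \<alpha> \<beta> (hp n c) (s, snd z)) = (\<lambda>s. \<Sum>j\<le>n. (\<kappa> * c j) * (\<alpha> * s + (- cnj \<beta> * snd z)) ^ j * (\<beta> * s + cnj \<alpha> * snd z) ^ (n - j))"
    by (simp add: hp_def tau_def sum_distrib_left mult_ac)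
  then have "D1 (\<lambda>z. \<kappa> * tau \<alpha> \<beta> (hp n c) z) z = deriv (\<lambda>s. \<Sum>j\<le>n. (\<kappa> * c j) * (\<alpha> * s + (- cnj \<beta> * snd z)) ^ j * (\<beta> * s + cnj \<alpha> * snd z) ^ (n - j)) (fst z)"
    by (simp only: D1_def)
  also have "\<dots> = \<kappa> * (\<alpha> * tau \<alpha> \<beta> (hpD1 n c) z + \<beta> * tau \<alpha> \<beta> (hpD2 n c) z)"
    by (simp only: deriv_gen') (simp add: hpD1_def hpD2_def tau_def sum_distrib_left algebra_simps)
  finally show "D1 (\<lambda>z. \<kappa> * tau \<alpha> \<beta> (hp n c) z) z = \<kappa> * (\<alpha> * tau \<alpha> \<beta> (hpD1 n c) z + \<beta> * tau \<alpha> \<beta> (hpD2 n c) z)" .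
qed

lemma D2_tau: "D2 (\<lambda>z. \<kappa> * tau \<alpha> \<beta> (hp n c) z) =
   (\<lambda>z. \<kappa> * (- cnj \<beta> * tau \<alpha> \<beta> (hpD1 n c) z + cnj \<alpha> * tau \<alpha> \<beta> (hpD2 n c) z))"
proof
  fix z :: "complex \<times> complex"
  have "(\<lambda>s. \<kappa> * tau \<alpha> \<beta> (hp n c) (fst z, s)) = (\<lambda>s. \<Sum>j\<le>n. (\<kappa> * c j) * ((- cnj \<beta>) * s + \<alpha> * fst z) ^ j * (cnj \<alpha> * s + \<beta> * fst z) ^ (n - j))"
    by (simp add: hp_def tau_def sum_distrib_left mult_ac add.commute)
  then have "D2 (\<lambda>z. \<kappa> * tau \<alpha> \<beta> (hp n c) z) z = deriv (\<lambda>s. \<Sum>j\<le>n. (\<kappa> * c j) * ((- cnj \<beta>) * s + \<alpha> * fst z) ^ j * (cnj \<alpha> * s + \<beta> * fst z) ^ (n - j)) (snd z)"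
    by (simp only: D2_def)
  also have "\<dots> = \<kappa> * (- cnj \<beta> * tau \<alpha> \<beta> (hpD1 n c) z + cnj \<alpha> * tau \<alpha> \<beta> (hpD2 n c) z)"
    by (simp only: deriv_gen') (simp add: hpD1_def hpD2_def tau_def sum_distrib_left algebra_simps)
  finally show "D2 (\<lambda>z. \<kappa> * tau \<alpha> \<beta> (hp n c) z) z = \<kappa> * (- cnj \<beta> * tau \<alpha> \<beta> (hpD1 n c) z + cnj \<alpha> * tau \<alpha> \<beta> (hpD2 n c) z)" .
qed

lemma hpD1_Suc: "hpD1 (Suc p) c = hp p (\<lambda>j. c (Suc j) * of_nat (Suc j))"
  unfolding hpD1_def hp_def by (simp only: sum.atMost_Suc_shift) (simp add: mult_ac)

lemma hpD2_Suc: "hpD2 (Suc p) c = hp p (\<lambda>j. c j * of_nat (Suc p - j))"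
proof
  fix z :: "complex \<times> complex"
  show "hpD2 (Suc p) c z = hp p (\<lambda>j. c j * of_nat (Suc p - j)) z"
    unfolding hpD2_def hp_def by (simp only: sum.atMost_Suc) (auto intro!: sum.cong simp: Suc_diff_le mult_ac)
qed

lemma D1_Ppoly: "F \<in> Ppoly (Suc p) \<Longrightarrow> D1 F \<in> Ppoly p"
  by (auto simp: Ppoly_iff D1_hp hpD1_Suc)
lemma D2_Ppoly: "F \<in> Ppoly (Suc p) \<Longrightarrow> D2 F \<in> Ppoly p"
  by (auto simp: Ppoly_iff D2_hp hpD2_Suc)

lemma D1_lin: "f \<in> Ppoly (Suc p) \<Longrightarrow> g \<in> Ppoly (Suc p) \<Longrightarrow> D1 (\<lambda>z. a * f z + b * g z) = (\<lambda>z. a * D1 f z + b * D1 g z)"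
  by (auto simp: Ppoly_iff D1_hp hpD1_Suc hp_lincomb algebra_simps)
lemma D2_lin: "f \<in> Ppoly (Suc p) \<Longrightarrow> g \<in> Ppoly (Suc p) \<Longrightarrow> D2 (\<lambda>z. a * f z + b * g z) = (\<lambda>z. a * D2 f z + b * D2 g z)"
  by (auto simp: Ppoly_iff D2_hp hpD2_Suc hp_lincomb algebra_simps)

lemma D1_tau': "F \<in> Ppoly n \<Longrightarrow> D1 (\<lambda>z. \<kappa> * tau \<alpha> \<beta> F z) = (\<lambda>z. \<kappa> * (\<alpha> * tau \<alpha> \<beta> (D1 F) z + \<beta> * tau \<alpha> \<beta> (D2 F) z))"
  by (auto simp: Ppoly_iff D1_tau D1_hp D2_hp)
lemma D2_tau': "F \<in> Ppoly n \<Longrightarrow> D2 (\<lambda>z. \<kappa> * tau \<alpha> \<beta> F z) = (\<lambda>z. \<kappa> * (- cnj \<beta> * tau \<alpha> \<beta> (D1 F) z + cnj \<alpha> * tau \<alpha> \<beta> (D2 F) z))"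
  by (auto simp: Ppoly_iff D2_tau D1_hp D2_hp)

lemma mul_snd: "G \<in> Ppoly m \<Longrightarrow> (\<lambda>z. snd z * G z) \<in> Ppoly (Suc m)"
proof -
  assume "G \<in> Ppoly m"
  then obtain c where G: "G = hp m c" by (auto simp: Ppoly_iff)
  have "(\<lambda>z. snd z * G z) = hp (Suc m) (\<lambda>j. if j \<le> m then c j else 0)"
  proof
    fix z :: "complex \<times> complex"
    show "snd z * G z = hp (Suc m) (\<lambda>j. if j \<le> m then c j else 0) z"
      unfolding G hp_def by (simp only: sum.atMost_Suc) (auto simp: sum_distrib_left Suc_diff_le mult_ac intro!: sum.cong)
  qed
  then show ?thesis by simp
qed

lemma mul_fst: "G \<in> Ppoly m \<Longrightarrow> (\<lambda>z. fst z * G z) \<in> Ppoly (Suc m)"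
proof -
  assume "G \<in> Ppoly m"
  then obtain c where G: "G = hp m c" by (auto simp: Ppoly_iff)
  have "(\<lambda>z. fst z * G z) = hp (Suc m) (\<lambda>j. if j = 0 then 0 else c (j - 1))"
  proof
    fix z :: "complex \<times> complex"
    show "fst z * G z = hp (Suc m) (\<lambda>j. if j = 0 then 0 else c (j - 1)) z"
      unfolding G hp_def by (simp only: sum.atMost_Suc_shift) (auto simp: sum_distrib_left mult_ac intro!: sum.cong)
  qed
  then show ?thesis by simp
qed

lemma kappa_plus: "cmod \<eta> = 1 \<Longrightarrow> \<eta> powi (- (h + 3)) = \<eta> powi (- h) * cnj \<eta> ^ 3"
proof -
  assume e: "cmod \<eta> = 1"
  then have ne: "\<eta> \<noteq> 0" by auto
  have c: "cnj \<eta> = inverse \<eta>" using norm1_cnj[OF e] ne by (simp add: field_simps)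
  have "\<eta> powi (- (h + 3)) = \<eta> powi (- h) * \<eta> powi (- 3)"
    using ne by (simp add: power_int_add[symmetric])
  then show ?thesis by (simp add: c power_int_minus power_inverse)
qed

lemma kappa_minus: "cmod \<eta> = 1 \<Longrightarrow> \<eta> powi (- (h - 3)) = \<eta> powi (- h) * \<eta> ^ 3"
proof -
  assume e: "cmod \<eta> = 1"
  then have ne: "\<eta> \<noteq> 0" by auto
  have "\<eta> powi (- (h - 3)) = \<eta> powi (- h + 3)"
    by (rule arg_cong[where f="\<lambda>k. \<eta> powi k"]) simp
  also have "\<dots> = \<eta> powi (- h) * \<eta> powi 3"
    by (rule power_int_add) (simp add: ne)
  finally show ?thesis by simp
qed

lemma alg1: "a * a' + b * b' = 1 \<Longrightarrow>
  (y::complex) * (e * c * F) = e * (c * a * ((b * x + a' * y) * F) + - (c * b) * ((a * x - b' * y) * F))"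
  by algebra
lemma alg2: "a * a' + b * b' = 1 \<Longrightarrow>
  (x::complex) * (e * c * F) = e * (c * a' * ((a * x - b' * y) * F) + c * b' * ((b * x + a' * y) * F))"
  by algebra

definition Phia :: "(cmat \<Rightarrow> 'v \<Rightarrow> 'v::real_vector) \<Rightarrow> ((complex \<times> complex \<Rightarrow> complex) \<Rightarrow> 'v) \<Rightarrow> (complex \<times> complex \<Rightarrow> complex) \<Rightarrow> 'v" where
  "Phia gact \<psi> G = - gact (Emat 3 2) (\<psi> (\<lambda>z. snd z * G z)) - gact (Emat 3 1) (\<psi> (\<lambda>z. fst z * G z))"

definition Phib :: "(cmat \<Rightarrow> 'v \<Rightarrow> 'v::real_vector) \<Rightarrow> ((complex \<times> complex \<Rightarrow> complex) \<Rightarrow> 'v) \<Rightarrow> (complex \<times> complex \<Rightarrow> complex) \<Rightarrow> 'v" where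
  "Phib gact \<psi> G = gact (Emat 1 3) (\<psi> (\<lambda>z. snd z * G z)) - gact (Emat 2 3) (\<psi> (\<lambda>z. fst z * G z))"

definition Psia :: "(cmat \<Rightarrow> 'v \<Rightarrow> 'v::real_vector) \<Rightarrow> ((complex \<times> complex \<Rightarrow> complex) \<Rightarrow> 'v) \<Rightarrow> (complex \<times> complex \<Rightarrow> complex) \<Rightarrow> 'v" where
  "Psia gact \<psi> F = gact (Emat 3 1) (\<psi> (D2 F)) - gact (Emat 3 2) (\<psi> (D1 F))"

definition Psib :: "(cmat \<Rightarrow> 'v \<Rightarrow> 'v::real_vector) \<Rightarrow> ((complex \<times> complex \<Rightarrow> complex) \<Rightarrow> 'v) \<Rightarrow> (complex \<times> complex \<Rightarrow> complex) \<Rightarrow> 'v" where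
  "Psib gact \<psi> F = gact (Emat 1 3) (\<psi> (D1 F)) + gact (Emat 2 3) (\<psi> (D2 F))"

context gkm
begin

lemma Phia_Khom:
  assumes \<psi>: "\<psi> \<in> Khom J kact h (Suc m)"
  shows "Phia gact \<psi> \<in> Khom J kact (h + 3) m"
  unfolding Khom_def
proof (intro CollectI conjI ballI allI impI)
  fix f g a b assume f: "f \<in> Ppoly m" and g: "g \<in> Ppoly m"
  have e1: "(\<lambda>z. snd z * (a * f z + b * g z)) = (\<lambda>z. a * (snd z * f z) + b * (snd z * g z))"
    by (simp add: fun_eq_iff algebra_simps)
  have e2: "(\<lambda>z. fst z * (a * f z + b * g z)) = (\<lambda>z. a * (fst z * f z) + b * (fst z * g z))"
    by (simp add: fun_eq_iff algebra_simps)
  show "Phia gact \<psi> (\<lambda>z. a * f z + b * g z) = cscale J a (Phia gact \<psi> f) + cscale J b (Phia gact \<psi> g)"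
    unfolding Phia_def e1 e2
    using psi_lin[OF \<psi> mul_snd[OF f] mul_snd[OF g]] psi_lin[OF \<psi> mul_fst[OF f] mul_fst[OF g]]
    by (simp add: g_lin sl3_Emat cs_add_right cs_diff_right cs_neg_right algebra_simps)
next
  fix \<eta> \<alpha> \<beta> f
  assume c: "cmod \<eta> = 1 \<and> (cmod \<alpha>)^2 + (cmod \<beta>)^2 = 1" and f: "f \<in> Ppoly m"
  let ?k = "kmat \<eta> \<alpha> \<beta>"
  let ?c3 = "cnj \<eta> ^ 3"
  let ?e = "\<eta> powi (- h)"
  let ?Y = "\<lambda>z. snd z * f z" and ?X = "\<lambda>z. fst z * f z"
  have K: "?k \<in> Kgrp" using c by (simp add: Kgrp_kmat)
  have N: "\<alpha> * cnj \<alpha> + \<beta> * cnj \<beta> = 1" using c norm2_cnj by blast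
  have kap: "\<eta> powi (- (h + 3)) = ?e * ?c3" using c kappa_plus by blast
  have Y: "?Y \<in> Ppoly (Suc m)" and X: "?X \<in> Ppoly (Suc m)" using mul_snd[OF f] mul_fst[OF f] .
  have e1: "(\<lambda>z. snd z * (\<eta> powi (- (h + 3)) * tau \<alpha> \<beta> f z))
      = (\<lambda>z. ?e * tau \<alpha> \<beta> (\<lambda>z. (?c3 * \<alpha>) * ?Y z + (- (?c3 * \<beta>)) * ?X z) z)"
  proof
    fix z :: "complex \<times> complex"
    show "snd z * (\<eta> powi (- (h + 3)) * tau \<alpha> \<beta> f z) = ?e * tau \<alpha> \<beta> (\<lambda>z. (?c3 * \<alpha>) * ?Y z + (- (?c3 * \<beta>)) * ?X z) z"
      unfolding tau_def kap snd_conv fst_conv by (rule alg1[OF N])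
  qed
  have e2: "(\<lambda>z. fst z * (\<eta> powi (- (h + 3)) * tau \<alpha> \<beta> f z))
      = (\<lambda>z. ?e * tau \<alpha> \<beta> (\<lambda>z. (?c3 * cnj \<alpha>) * ?X z + (?c3 * cnj \<beta>) * ?Y z) z)"
  proof
    fix z :: "complex \<times> complex"
    show "fst z * (\<eta> powi (- (h + 3)) * tau \<alpha> \<beta> f z) = ?e * tau \<alpha> \<beta> (\<lambda>z. (?c3 * cnj \<alpha>) * ?X z + (?c3 * cnj \<beta>) * ?Y z) z"
      unfolding tau_def kap snd_conv fst_conv by (rule alg2[OF N])
  qed
  have "Phia gact \<psi> (\<lambda>z. \<eta> powi (- (h + 3)) * tau \<alpha> \<beta> f z)
     = - G 3 2 (kact ?k (cscale J (?c3 * \<alpha>) (\<psi> ?Y) + cscale J (- (?c3 * \<beta>)) (\<psi> ?X)))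
       - G 3 1 (kact ?k (cscale J (?c3 * cnj \<alpha>) (\<psi> ?X) + cscale J (?c3 * cnj \<beta>) (\<psi> ?Y)))"
    unfolding Phia_def e1 e2
    by (simp only: psi_eq[OF \<psi> conjunct1[OF c] conjunct2[OF c] Ppoly_lincomb[OF Y X]]
       psi_eq[OF \<psi> conjunct1[OF c] conjunct2[OF c] Ppoly_lincomb[OF X Y]] psi_lin[OF \<psi> Y X] psi_lin[OF \<psi> X Y])
  also have "\<dots> = kact ?k (Phia gact \<psi> f)"
    unfolding Phia_def
    using c by (simp add: k_clin[OF K, THEN clin_diff] k_clin[OF K, THEN clin_neg] Ad_act k_add[OF K] k_cs[OF K]
        g_lin sl3_Emat cs_add_right cs_neg_left algebra_simps)
  finally show "Phia gact \<psi> (\<lambda>z. \<eta> powi (- (h + 3)) * tau \<alpha> \<beta> f z) = kact ?k (Phia gact \<psi> f)" .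
qed

lemma Phib_Khom:
  assumes \<psi>: "\<psi> \<in> Khom J kact h (Suc m)"
  shows "Phib gact \<psi> \<in> Khom J kact (h - 3) m"
  unfolding Khom_def
proof (intro CollectI conjI ballI allI impI)
  fix f g a b assume f: "f \<in> Ppoly m" and g: "g \<in> Ppoly m"
  have e1: "(\<lambda>z. snd z * (a * f z + b * g z)) = (\<lambda>z. a * (snd z * f z) + b * (snd z * g z))"
    by (simp add: fun_eq_iff algebra_simps)
  have e2: "(\<lambda>z. fst z * (a * f z + b * g z)) = (\<lambda>z. a * (fst z * f z) + b * (fst z * g z))"
    by (simp add: fun_eq_iff algebra_simps)
  show "Phib gact \<psi> (\<lambda>z. a * f z + b * g z) = cscale J a (Phib gact \<psi> f) + cscale J b (Phib gact \<psi> g)"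
    unfolding Phib_def e1 e2
    using psi_lin[OF \<psi> mul_snd[OF f] mul_snd[OF g]] psi_lin[OF \<psi> mul_fst[OF f] mul_fst[OF g]]
    by (simp add: g_lin sl3_Emat cs_add_right cs_diff_right cs_neg_right algebra_simps)
next
  fix \<eta> \<alpha> \<beta> f
  assume c: "cmod \<eta> = 1 \<and> (cmod \<alpha>)^2 + (cmod \<beta>)^2 = 1" and f: "f \<in> Ppoly m"
  let ?k = "kmat \<eta> \<alpha> \<beta>"
  let ?c3 = "\<eta> ^ 3"
  let ?e = "\<eta> powi (- h)"
  let ?Y = "\<lambda>z. snd z * f z" and ?X = "\<lambda>z. fst z * f z"
  have K: "?k \<in> Kgrp" using c by (simp add: Kgrp_kmat)
  have N: "\<alpha> * cnj \<alpha> + \<beta> * cnj \<beta> = 1" using c norm2_cnj by blast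
  have kap: "\<eta> powi (- (h - 3)) = ?e * ?c3" using c kappa_minus by blast
  have Y: "?Y \<in> Ppoly (Suc m)" and X: "?X \<in> Ppoly (Suc m)" using mul_snd[OF f] mul_fst[OF f] .
  have e1: "(\<lambda>z. snd z * (\<eta> powi (- (h - 3)) * tau \<alpha> \<beta> f z))
      = (\<lambda>z. ?e * tau \<alpha> \<beta> (\<lambda>z. (?c3 * \<alpha>) * ?Y z + (- (?c3 * \<beta>)) * ?X z) z)"
  proof
    fix z :: "complex \<times> complex"
    show "snd z * (\<eta> powi (- (h - 3)) * tau \<alpha> \<beta> f z) = ?e * tau \<alpha> \<beta> (\<lambda>z. (?c3 * \<alpha>) * ?Y z + (- (?c3 * \<beta>)) * ?X z) z"
      unfolding tau_def kap snd_conv fst_conv by (rule alg1[OF N])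
  qed
  have e2: "(\<lambda>z. fst z * (\<eta> powi (- (h - 3)) * tau \<alpha> \<beta> f z))
      = (\<lambda>z. ?e * tau \<alpha> \<beta> (\<lambda>z. (?c3 * cnj \<alpha>) * ?X z + (?c3 * cnj \<beta>) * ?Y z) z)"
  proof
    fix z :: "complex \<times> complex"
    show "fst z * (\<eta> powi (- (h - 3)) * tau \<alpha> \<beta> f z) = ?e * tau \<alpha> \<beta> (\<lambda>z. (?c3 * cnj \<alpha>) * ?X z + (?c3 * cnj \<beta>) * ?Y z) z"
      unfolding tau_def kap snd_conv fst_conv by (rule alg2[OF N])
  qed
  have "Phib gact \<psi> (\<lambda>z. \<eta> powi (- (h - 3)) * tau \<alpha> \<beta> f z)
     = G 1 3 (kact ?k (cscale J (?c3 * \<alpha>) (\<psi> ?Y) + cscale J (- (?c3 * \<beta>)) (\<psi> ?X)))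
       - G 2 3 (kact ?k (cscale J (?c3 * cnj \<alpha>) (\<psi> ?X) + cscale J (?c3 * cnj \<beta>) (\<psi> ?Y)))"
    unfolding Phib_def e1 e2
    by (simp only: psi_eq[OF \<psi> conjunct1[OF c] conjunct2[OF c] Ppoly_lincomb[OF Y X]]
       psi_eq[OF \<psi> conjunct1[OF c] conjunct2[OF c] Ppoly_lincomb[OF X Y]] psi_lin[OF \<psi> Y X] psi_lin[OF \<psi> X Y])
  also have "\<dots> = kact ?k (Phib gact \<psi> f)"
    unfolding Phib_def
    using c by (simp add: k_clin[OF K, THEN clin_diff] k_clin[OF K, THEN clin_neg] Ad_act k_add[OF K] k_cs[OF K]
        g_lin sl3_Emat cs_add_right cs_neg_left algebra_simps)
  finally show "Phib gact \<psi> (\<lambda>z. \<eta> powi (- (h - 3)) * tau \<alpha> \<beta> f z) = kact ?k (Phib gact \<psi> f)" .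
qed

lemma Psia_Khom:
  assumes \<psi>: "\<psi> \<in> Khom J kact h p"
  shows "Psia gact \<psi> \<in> Khom J kact (h + 3) (Suc p)"
  unfolding Khom_def
proof (intro CollectI conjI ballI allI impI)
  fix f g a b assume f: "f \<in> Ppoly (Suc p)" and g: "g \<in> Ppoly (Suc p)"
  show "Psia gact \<psi> (\<lambda>z. a * f z + b * g z) = cscale J a (Psia gact \<psi> f) + cscale J b (Psia gact \<psi> g)"
    unfolding Psia_def D1_lin[OF f g] D2_lin[OF f g]
    using psi_lin[OF \<psi> D1_Ppoly[OF f] D1_Ppoly[OF g]] psi_lin[OF \<psi> D2_Ppoly[OF f] D2_Ppoly[OF g]]
    by (simp add: g_lin sl3_Emat cs_add_right cs_diff_right cs_neg_right algebra_simps)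
next
  fix \<eta> \<alpha> \<beta> f
  assume c: "cmod \<eta> = 1 \<and> (cmod \<alpha>)^2 + (cmod \<beta>)^2 = 1" and f: "f \<in> Ppoly (Suc p)"
  let ?k = "kmat \<eta> \<alpha> \<beta>"
  let ?c3 = "cnj \<eta> ^ 3"
  let ?e = "\<eta> powi (- h)"
  let ?P1 = "D1 f" and ?P2 = "D2 f"
  have K: "?k \<in> Kgrp" using c by (simp add: Kgrp_kmat)
  have kap: "\<eta> powi (- (h + 3)) = ?e * ?c3" using c kappa_plus by blast
  have P1: "?P1 \<in> Ppoly p" and P2: "?P2 \<in> Ppoly p" using D1_Ppoly[OF f] D2_Ppoly[OF f] .
  have e1: "D1 (\<lambda>z. \<eta> powi (- (h + 3)) * tau \<alpha> \<beta> f z)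
      = (\<lambda>z. ?e * tau \<alpha> \<beta> (\<lambda>z. (?c3 * \<alpha>) * ?P1 z + (?c3 * \<beta>) * ?P2 z) z)"
    unfolding D1_tau'[OF f] kap by (simp add: tau_def fun_eq_iff algebra_simps)
  have e2: "D2 (\<lambda>z. \<eta> powi (- (h + 3)) * tau \<alpha> \<beta> f z)
      = (\<lambda>z. ?e * tau \<alpha> \<beta> (\<lambda>z. (- (?c3 * cnj \<beta>)) * ?P1 z + (?c3 * cnj \<alpha>) * ?P2 z) z)"
    unfolding D2_tau'[OF f] kap by (simp add: tau_def fun_eq_iff algebra_simps)
  have "Psia gact \<psi> (\<lambda>z. \<eta> powi (- (h + 3)) * tau \<alpha> \<beta> f z)
     = G 3 1 (kact ?k (cscale J (- (?c3 * cnj \<beta>)) (\<psi> ?P1) + cscale J (?c3 * cnj \<alpha>) (\<psi> ?P2)))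
       - G 3 2 (kact ?k (cscale J (?c3 * \<alpha>) (\<psi> ?P1) + cscale J (?c3 * \<beta>) (\<psi> ?P2)))"
    unfolding Psia_def e1 e2
    by (simp only: psi_eq[OF \<psi> conjunct1[OF c] conjunct2[OF c] Ppoly_lincomb[OF P1 P2]] psi_lin[OF \<psi> P1 P2])
  also have "\<dots> = kact ?k (Psia gact \<psi> f)"
    unfolding Psia_def
    using c by (simp add: k_clin[OF K, THEN clin_diff] k_clin[OF K, THEN clin_neg] Ad_act k_add[OF K] k_cs[OF K]
        g_lin sl3_Emat cs_add_right cs_neg_left algebra_simps)
  finally show "Psia gact \<psi> (\<lambda>z. \<eta> powi (- (h + 3)) * tau \<alpha> \<beta> f z) = kact ?k (Psia gact \<psi> f)" .
qed

lemma Psib_Khom: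
  assumes \<psi>: "\<psi> \<in> Khom J kact h p"
  shows "Psib gact \<psi> \<in> Khom J kact (h - 3) (Suc p)"
  unfolding Khom_def
proof (intro CollectI conjI ballI allI impI)
  fix f g a b assume f: "f \<in> Ppoly (Suc p)" and g: "g \<in> Ppoly (Suc p)"
  show "Psib gact \<psi> (\<lambda>z. a * f z + b * g z) = cscale J a (Psib gact \<psi> f) + cscale J b (Psib gact \<psi> g)"
    unfolding Psib_def D1_lin[OF f g] D2_lin[OF f g]
    using psi_lin[OF \<psi> D1_Ppoly[OF f] D1_Ppoly[OF g]] psi_lin[OF \<psi> D2_Ppoly[OF f] D2_Ppoly[OF g]]
    by (simp add: g_lin sl3_Emat cs_add_right cs_diff_right cs_neg_right algebra_simps)
next
  fix \<eta> \<alpha> \<beta> f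
  assume c: "cmod \<eta> = 1 \<and> (cmod \<alpha>)^2 + (cmod \<beta>)^2 = 1" and f: "f \<in> Ppoly (Suc p)"
  let ?k = "kmat \<eta> \<alpha> \<beta>"
  let ?c3 = "\<eta> ^ 3"
  let ?e = "\<eta> powi (- h)"
  let ?P1 = "D1 f" and ?P2 = "D2 f"
  have K: "?k \<in> Kgrp" using c by (simp add: Kgrp_kmat)
  have kap: "\<eta> powi (- (h - 3)) = ?e * ?c3" using c kappa_minus by blast
  have P1: "?P1 \<in> Ppoly p" and P2: "?P2 \<in> Ppoly p" using D1_Ppoly[OF f] D2_Ppoly[OF f] .
  have e1: "D1 (\<lambda>z. \<eta> powi (- (h - 3)) * tau \<alpha> \<beta> f z)
      = (\<lambda>z. ?e * tau \<alpha> \<beta> (\<lambda>z. (?c3 * \<alpha>) * ?P1 z + (?c3 * \<beta>) * ?P2 z) z)"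
    unfolding D1_tau'[OF f] kap by (simp add: tau_def fun_eq_iff algebra_simps)
  have e2: "D2 (\<lambda>z. \<eta> powi (- (h - 3)) * tau \<alpha> \<beta> f z)
      = (\<lambda>z. ?e * tau \<alpha> \<beta> (\<lambda>z. (- (?c3 * cnj \<beta>)) * ?P1 z + (?c3 * cnj \<alpha>) * ?P2 z) z)"
    unfolding D2_tau'[OF f] kap by (simp add: tau_def fun_eq_iff algebra_simps)
  have "Psib gact \<psi> (\<lambda>z. \<eta> powi (- (h - 3)) * tau \<alpha> \<beta> f z)
     = G 1 3 (kact ?k (cscale J (?c3 * \<alpha>) (\<psi> ?P1) + cscale J (?c3 * \<beta>) (\<psi> ?P2)))
       + G 2 3 (kact ?k (cscale J (- (?c3 * cnj \<beta>)) (\<psi> ?P1) + cscale J (?c3 * cnj \<alpha>) (\<psi> ?P2)))"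
    unfolding Psib_def e1 e2
    by (simp only: psi_eq[OF \<psi> conjunct1[OF c] conjunct2[OF c] Ppoly_lincomb[OF P1 P2]] psi_lin[OF \<psi> P1 P2])
  also have "\<dots> = kact ?k (Psib gact \<psi> f)"
    unfolding Psib_def
    using c by (simp add: k_clin[OF K, THEN clin_add] k_clin[OF K, THEN clin_diff] Ad_act k_add[OF K] k_cs[OF K]
        g_lin sl3_Emat cs_add_right cs_neg_left algebra_simps)
  finally show "Psib gact \<psi> (\<lambda>z. \<eta> powi (- (h - 3)) * tau \<alpha> \<beta> f z) = kact ?k (Psib gact \<psi> f)" .
qed

end

lemma sl3_tr: "mtrace X = 0 \<Longrightarrow> X \<in> sl3" by (simp add: sl3_def)

lemma msc_neg1: "(-1) *m X = - X" by (simp add: msc_def vec_eq_iff)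

lemma H_W0: "Emat 2 2 - Emat 1 1 = \<i> *m W0"
  by (auto simp: W0_def mat_simps)

context gkm
begin

lemma comm: "X \<in> sl3 \<Longrightarrow> Y \<in> sl3 \<Longrightarrow> gact X (gact Y w) = gact Y (gact X w) + gact (X ** Y - Y ** X) w"
  using g_br[of X Y w] by simp

lemma g_zero_mat: "gact 0 w = 0"
  using g_smul[OF sl3_Emat[of 1 2], of 0 w] by simp

lemma g_uminus: "X \<in> sl3 \<Longrightarrow> gact (- X) w = - gact X w"
  using g_smul[of X "-1" w] by (simp add: msc_neg1 cs_neg_left)

lemma br_ec: "G 1 2 (G 3 1 w) = G 3 1 (G 1 2 w) - G 3 2 w"
  using comm[of "Emat 1 2" "Emat 3 1" w] by (simp add: sl3_Emat Emat_mult g_uminus)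
lemma br_eb: "G 1 2 (G 2 3 w) = G 2 3 (G 1 2 w) + G 1 3 w"
  using comm[of "Emat 1 2" "Emat 2 3" w] by (simp add: sl3_Emat Emat_mult)
lemma br_da: "G 3 2 (G 1 3 w) = G 1 3 (G 3 2 w) - G 1 2 w"
  using comm[of "Emat 3 2" "Emat 1 3" w] by (simp add: sl3_Emat Emat_mult g_uminus)
lemma br_de: "G 3 2 (G 1 2 w) = G 1 2 (G 3 2 w)"
  using comm[of "Emat 3 2" "Emat 1 2" w] by (simp add: sl3_Emat Emat_mult g_zero_mat)
lemma br_ae: "G 1 3 (G 1 2 w) = G 1 2 (G 1 3 w)"
  using comm[of "Emat 1 3" "Emat 1 2" w] by (simp add: sl3_Emat Emat_mult g_zero_mat)
lemma br_cb: "G 3 1 (G 2 3 w) = G 2 3 (G 3 1 w) - G 2 1 w"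
  using comm[of "Emat 3 1" "Emat 2 3" w] by (simp add: sl3_Emat Emat_mult g_uminus)

lemma sl3_H: "Emat 2 2 - Emat 1 1 \<in> sl3"
  by (rule sl3_tr) (simp add: mtrace_diff mtrace_Emat)

lemma br_fe: "G 2 1 (G 1 2 w) = G 1 2 (G 2 1 w) + gact (Emat 2 2 - Emat 1 1) w"
  using comm[of "Emat 2 1" "Emat 1 2" w] by (simp add: sl3_Emat Emat_mult)

lemma br_H: "(G 3 1 (G 1 3 w) - G 1 3 (G 3 1 w)) + (G 2 3 (G 3 2 w) - G 3 2 (G 2 3 w)) = gact (Emat 2 2 - Emat 1 1) w"
proof -
  have s1: "Emat 3 3 - Emat 1 1 \<in> sl3" by (rule sl3_tr) (simp add: mtrace_diff mtrace_Emat)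
  have s2: "Emat 2 2 - Emat 3 3 \<in> sl3" by (rule sl3_tr) (simp add: mtrace_diff mtrace_Emat)
  have "G 3 1 (G 1 3 w) - G 1 3 (G 3 1 w) = gact (Emat 3 3 - Emat 1 1) w"
    using g_br[of "Emat 3 1" "Emat 1 3" w] by (simp add: sl3_Emat Emat_mult)
  moreover have "G 2 3 (G 3 2 w) - G 3 2 (G 2 3 w) = gact (Emat 2 2 - Emat 3 3) w"
    using g_br[of "Emat 2 3" "Emat 3 2" w] by (simp add: sl3_Emat Emat_mult)
  moreover have "gact (Emat 3 3 - Emat 1 1) w + gact (Emat 2 2 - Emat 3 3) w = gact (Emat 2 2 - Emat 1 1) w"
    using g_plus[OF s1 s2, of w] by simp
  ultimately show ?thesis by simp
qed

lemma H_act: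
  assumes \<psi>: "\<psi> \<in> Khom J kact h n"
  shows "gact (Emat 2 2 - Emat 1 1) (\<psi> (mnm n 0)) = real n *\<^sub>R \<psi> (mnm n 0)"
  using W0_act[OF \<psi>, of 0] by (simp add: H_W0 g_smul sl3_W0 cs_mult cs_of_nat[symmetric])


lemma Z12_act: "gact Z12 w = 2 *\<^sub>R G 1 2 w"
  by (simp add: Z12_def g_smul sl3_Emat cs_numeral)

lemma Vhpp_neg: "Vhpp J gact kact h (-1) = {0}"
  by (simp add: Vhpp_def)

end

lemma D1_mnm0: "D1 (mnm (Suc n) 0) = (\<lambda>z. 0)"
  by (simp add: mnm_hp D1_hp hpD1_Suc hp_zero)

lemma D2_mnm0: "D2 (mnm (Suc n) 0) = (\<lambda>z. of_nat (Suc n) * mnm n 0 z)"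
proof -
  have "D2 (mnm (Suc n) 0) = hp n (\<lambda>j. (if j = 0 then 1 else 0) * of_nat (Suc n - j))"
    by (simp only: mnm_hp[of 0 "Suc n"] D2_hp hpD2_Suc)
  also have "\<dots> = hp n (\<lambda>j. of_nat (Suc n) * (if j = 0 then 1 else 0))"
    by (rule arg_cong[where f="hp n"]) auto
  also have "\<dots> = (\<lambda>z. of_nat (Suc n) * mnm n 0 z)"
    by (simp only: hp_smul[symmetric] mnm_hp[of 0 n])
  finally show ?thesis .
qed

lemma mul_mnm: "(\<lambda>z. snd z * mnm m 0 z) = mnm (Suc m) 0" "(\<lambda>z. fst z * mnm m 0 z) = mnm (Suc m) 1"
  by (simp_all add: mnm_def fun_eq_iff)

lemma vec_comb1:
  fixes x y :: "'a::real_vector"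
  shows "x + (1 / (2 * (real n + 1))) *\<^sub>R 2 *\<^sub>R (real n *\<^sub>R y - x) = (real n / (real n + 1)) *\<^sub>R (x + y)"
proof -
  define c where "c = 1 / (real n + 1)"
  have cc0: "(1 / (2 * (real n + 1))) * 2 = c" by (simp add: c_def field_simps)
  have cc: "(1 / (2 * (real n + 1))) *\<^sub>R 2 *\<^sub>R z = c *\<^sub>R z" for z :: 'a
    by (simp only: scaleR_scaleR cc0)
  have c1: "1 - c = real n / (real n + 1)" and c2: "c * real n = real n / (real n + 1)"
    by (simp_all add: c_def field_simps)
  have "x + (1 / (2 * (real n + 1))) *\<^sub>R 2 *\<^sub>R (real n *\<^sub>R y - x) = x + c *\<^sub>R (real n *\<^sub>R y - x)"
    by (simp only: cc)
  also have "\<dots> = (1 - c) *\<^sub>R x + (c * real n) *\<^sub>R y"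
    by (simp add: algebra_simps)
  also have "\<dots> = (real n / (real n + 1)) *\<^sub>R (x + y)"
    by (simp only: c1 c2 scaleR_add_right)
  finally show ?thesis .
qed

lemma vec_comb2:
  fixes x y :: "'a::real_vector"
  shows "x - (1 / (2 * (real n + 1))) *\<^sub>R 2 *\<^sub>R (real n *\<^sub>R y + x) = (real n / (real n + 1)) *\<^sub>R (x - y)"
proof -
  define c where "c = 1 / (real n + 1)"
  have cc0: "(1 / (2 * (real n + 1))) * 2 = c" by (simp add: c_def field_simps)
  have cc: "(1 / (2 * (real n + 1))) *\<^sub>R 2 *\<^sub>R z = c *\<^sub>R z" for z :: 'a
    by (simp only: scaleR_scaleR cc0)
  have c1: "1 - c = real n / (real n + 1)" and c2: "c * real n = real n / (real n + 1)"
    by (simp_all add: c_def field_simps)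
  have "x - (1 / (2 * (real n + 1))) *\<^sub>R 2 *\<^sub>R (real n *\<^sub>R y + x) = x - c *\<^sub>R (real n *\<^sub>R y + x)"
    by (simp only: cc)
  also have "\<dots> = (1 - c) *\<^sub>R x - (c * real n) *\<^sub>R y"
    by (simp add: algebra_simps)
  also have "\<dots> = (real n / (real n + 1)) *\<^sub>R (x - y)"
    by (simp only: c1 c2 scaleR_diff_right)
  finally show ?thesis .
qed

lemma coef1: "(1 / (2 * (of_int (int n) + 1)) :: complex) = of_real (1 / (2 * (real n + 1)))"
  by simp

context gkm
begin

lemma S31_in:
  assumes v: "v \<in> Vhpp J gact kact h (int n)"
  shows "G 3 1 v \<in> Vhpp J gact kact (h + 3) (int (Suc n))"
proof -
  obtain \<psi> where \<psi>: "\<psi> \<in> Khom J kact h n" and vv: "v = \<psi> (mnm n 0)" using Vhpp_hw[OF v] by blast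
  have "Psia gact \<psi> (mnm (Suc n) 0) = real (Suc n) *\<^sub>R G 3 1 v"
    unfolding Psia_def D1_mnm0 D2_mnm0 vv
    by (simp add: psi_smul[OF \<psi> mnm_in[of 0 n]] psi_zero[OF \<psi>] g_lin sl3_Emat cs_of_nat cs_add_left scaleR_add_left)
  then have "G 3 1 v = (1 / real (Suc n)) *\<^sub>R Psia gact \<psi> (mnm (Suc n) 0)"
    by simp
  then show ?thesis using hw_in_Vhpp[OF Psia_Khom[OF \<psi>]] by simp
qed

lemma S23_in:
  assumes v: "v \<in> Vhpp J gact kact h (int n)"
  shows "G 2 3 v \<in> Vhpp J gact kact (h - 3) (int (Suc n))"
proof -
  obtain \<psi> where \<psi>: "\<psi> \<in> Khom J kact h n" and vv: "v = \<psi> (mnm n 0)" using Vhpp_hw[OF v] by blast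
  have "Psib gact \<psi> (mnm (Suc n) 0) = real (Suc n) *\<^sub>R G 2 3 v"
    unfolding Psib_def D1_mnm0 D2_mnm0 vv
    by (simp add: psi_smul[OF \<psi> mnm_in[of 0 n]] psi_zero[OF \<psi>] g_lin sl3_Emat cs_of_nat cs_add_left scaleR_add_left)
  then have "G 2 3 v = (1 / real (Suc n)) *\<^sub>R Psib gact \<psi> (mnm (Suc n) 0)"
    by simp
  then show ?thesis using hw_in_Vhpp[OF Psib_Khom[OF \<psi>]] by simp
qed

lemma S3m1_eq:
  assumes \<psi>: "\<psi> \<in> Khom J kact h n"
  shows "S_3_m1 J gact (int n) (\<psi> (mnm n 0)) = (real n / (real n + 1)) *\<^sub>R (G 3 2 (\<psi> (mnm n 0)) + G 3 1 (\<psi> (mnm n 1)))"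
proof -
  have "S_3_m1 J gact (int n) (\<psi> (mnm n 0)) = G 3 2 (\<psi> (mnm n 0)) + (1 / (2 * (real n + 1))) *\<^sub>R 2 *\<^sub>R (real n *\<^sub>R G 3 1 (\<psi> (mnm n 1)) - G 3 2 (\<psi> (mnm n 0)))"
    unfolding S_3_m1_def Z31_def Z32_def coef1 cs_of_real Z12_act br_ec E12_act[OF \<psi>]
    by (simp add: g_lin sl3_Emat)
  also have "\<dots> = (real n / (real n + 1)) *\<^sub>R (G 3 2 (\<psi> (mnm n 0)) + G 3 1 (\<psi> (mnm n 1)))"
    by (rule vec_comb1)
  finally show ?thesis .
qed

lemma Sm3m1_eq:
  assumes \<psi>: "\<psi> \<in> Khom J kact h n"
  shows "S_m3_m1 J gact (int n) (\<psi> (mnm n 0)) = (real n / (real n + 1)) *\<^sub>R (G 1 3 (\<psi> (mnm n 0)) - G 2 3 (\<psi> (mnm n 1)))"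
proof -
  have "S_m3_m1 J gact (int n) (\<psi> (mnm n 0)) = G 1 3 (\<psi> (mnm n 0)) - (1 / (2 * (real n + 1))) *\<^sub>R 2 *\<^sub>R (real n *\<^sub>R G 2 3 (\<psi> (mnm n 1)) + G 1 3 (\<psi> (mnm n 0)))"
    unfolding S_m3_m1_def Z13_def Z23_def coef1 cs_of_real Z12_act br_eb E12_act[OF \<psi>]
    by (simp add: g_lin sl3_Emat)
  also have "\<dots> = (real n / (real n + 1)) *\<^sub>R (G 1 3 (\<psi> (mnm n 0)) - G 2 3 (\<psi> (mnm n 1)))"
    by (rule vec_comb2)
  finally show ?thesis .
qed

lemma S3m1_in:
  assumes v: "v \<in> Vhpp J gact kact h (int n)"
  shows "S_3_m1 J gact (int n) v \<in> Vhpp J gact kact (h + 3) (int n - 1)"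
proof -
  obtain \<psi> where \<psi>: "\<psi> \<in> Khom J kact h n" and vv: "v = \<psi> (mnm n 0)" using Vhpp_hw[OF v] by blast
  show ?thesis
  proof (cases n)
    case 0
    then show ?thesis unfolding vv S3m1_eq[OF \<psi>] by (simp add: Vhpp_def)
  next
    case (Suc m)
    have P: "Phia gact \<psi> (mnm m 0) = - (G 3 2 (\<psi> (mnm n 0)) + G 3 1 (\<psi> (mnm n 1)))"
      unfolding Phia_def mul_mnm Suc by simp
    have "S_3_m1 J gact (int n) v = (- (real n / (real n + 1))) *\<^sub>R Phia gact \<psi> (mnm m 0)"
      unfolding vv S3m1_eq[OF \<psi>] P by (simp add: scaleR_diff_right scaleR_add_right)
    moreover have "int n - 1 = int m" using Suc by simp
    moreover have "\<psi> \<in> Khom J kact h (Suc m)" using \<psi> Suc by simp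
    ultimately show ?thesis using hw_in_Vhpp[OF Phia_Khom] by (simp only:)
  qed
qed

lemma Sm3m1_in:
  assumes v: "v \<in> Vhpp J gact kact h (int n)"
  shows "S_m3_m1 J gact (int n) v \<in> Vhpp J gact kact (h - 3) (int n - 1)"
proof -
  obtain \<psi> where \<psi>: "\<psi> \<in> Khom J kact h n" and vv: "v = \<psi> (mnm n 0)" using Vhpp_hw[OF v] by blast
  show ?thesis
  proof (cases n)
    case 0
    then show ?thesis unfolding vv Sm3m1_eq[OF \<psi>] by (simp add: Vhpp_def)
  next
    case (Suc m)
    have P: "Phib gact \<psi> (mnm m 0) = G 1 3 (\<psi> (mnm n 0)) - G 2 3 (\<psi> (mnm n 1))"
      unfolding Phib_def mul_mnm Suc by simp
    have "S_m3_m1 J gact (int n) v = (real n / (real n + 1)) *\<^sub>R Phib gact \<psi> (mnm m 0)"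
      unfolding vv Sm3m1_eq[OF \<psi>] P by simp
    moreover have "int n - 1 = int m" using Suc by simp
    moreover have "\<psi> \<in> Khom J kact h (Suc m)" using \<psi> Suc by simp
    ultimately show ?thesis using hw_in_Vhpp[OF Phib_Khom] by (simp only:)
  qed
qed

lemma comm1:
  assumes v: "v \<in> Vhpp J gact kact h (int n)"
  shows "G 3 1 (G 2 3 v) = G 2 3 (G 3 1 v)"
proof -
  obtain \<psi> where \<psi>: "\<psi> \<in> Khom J kact h n" and vv: "v = \<psi> (mnm n 0)" using Vhpp_hw[OF v] by blast
  show ?thesis unfolding br_cb vv E21_act[OF \<psi>] by (simp add: g_lin sl3_Emat)
qed


lemma Z_sl3: "Z12 \<in> sl3" "Z13 \<in> sl3" "Z23 \<in> sl3" "Z31 \<in> sl3" "Z32 \<in> sl3"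
  by (simp_all add: Z12_def Z13_def Z23_def Z31_def Z32_def sl3_msc sl3_Emat)

lemma comm2:
  assumes v: "v \<in> Vhpp J gact kact h (int n)"
  shows "S_3_m1 J gact (int n - 1) (S_m3_m1 J gact (int n) v) = S_m3_m1 J gact (int n - 1) (S_3_m1 J gact (int n) v)"
proof (cases n)
  case 0
  have "S_m3_m1 J gact (int n) v = 0" using Sm3m1_in[OF v] 0 by (simp add: Vhpp_def)
  moreover have "S_3_m1 J gact (int n) v = 0" using S3m1_in[OF v] 0 by (simp add: Vhpp_def)
  ultimately show ?thesis
    by (simp add: S_3_m1_def S_m3_m1_def g_0 Z_sl3)
next
  case (Suc n')
  then have n1: "real n \<ge> 1" by simp
  obtain \<psi> where \<psi>: "\<psi> \<in> Khom J kact h n" and vv: "v = \<psi> (mnm n 0)" using Vhpp_hw[OF v] by blast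
  have fv: "G 2 1 v = 0" unfolding vv by (rule E21_act[OF \<psi>])
  have Hv: "gact (Emat 2 2 - Emat 1 1) v = real n *\<^sub>R v" unfolding vv by (rule H_act[OF \<psi>])
  define k where "k = 1 / (real n + 1)"
  define m where "m = 1 / real n"
  have kk0: "(1 / (2 * (real n + 1))) * 2 = k" by (simp add: k_def field_simps)
  have kk: "(1 / (2 * (real n + 1))) *\<^sub>R 2 *\<^sub>R z = k *\<^sub>R z" for z :: 'v
    by (simp only: scaleR_scaleR kk0)
  have mm: "(1 / (2 * (real_of_int (int n - 1) + 1))) *\<^sub>R 2 *\<^sub>R z = m *\<^sub>R z" for z :: 'v
    by (simp add: m_def)
  have c0: "(1 / (2 * (of_int (int n - 1) + 1)) :: complex) = of_real (1 / (2 * (real_of_int (int n - 1) + 1)))"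
    by simp
  have u: "S_m3_m1 J gact (int n) v = G 1 3 v - k *\<^sub>R G 1 2 (G 2 3 v)"
    unfolding S_m3_m1_def Z13_def Z23_def coef1 cs_of_real Z12_act kk ..
  have u': "S_3_m1 J gact (int n) v = G 3 2 v + k *\<^sub>R G 1 2 (G 3 1 v)"
    unfolding S_3_m1_def Z31_def Z32_def coef1 cs_of_real Z12_act kk ..
  have L: "S_3_m1 J gact (int n - 1) w = G 3 2 w + m *\<^sub>R G 1 2 (G 3 1 w)" for w
    unfolding S_3_m1_def Z31_def Z32_def c0 cs_of_real Z12_act mm ..
  have R: "S_m3_m1 J gact (int n - 1) w = G 1 3 w - m *\<^sub>R G 1 2 (G 2 3 w)" for w
    unfolding S_m3_m1_def Z13_def Z23_def c0 cs_of_real Z12_act mm ..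
  define A1 where "A1 = G 1 3 (G 3 2 v)"
  define A2 where "A2 = G 1 2 v"
  define A3 where "A3 = G 1 2 (G 3 2 (G 2 3 v))"
  define A4 where "A4 = G 1 2 (G 3 1 (G 1 3 v))"
  define A5 where "A5 = G 1 2 (G 1 3 (G 3 1 v))"
  define A6 where "A6 = G 1 2 (G 2 3 (G 3 2 v))"
  define A7 where "A7 = G 1 2 (G 3 1 (G 1 2 (G 2 3 v)))"
  define A8 where "A8 = G 1 2 (G 2 3 (G 1 2 (G 3 1 v)))"
  have LHS: "S_3_m1 J gact (int n - 1) (S_m3_m1 J gact (int n) v) = (A1 - A2) - k *\<^sub>R A3 + m *\<^sub>R (A4 - k *\<^sub>R A7)"
    unfolding L u A1_def A2_def A3_def A4_def A7_def by (simp add: g_lin sl3_Emat br_da br_de)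
  have RHS: "S_m3_m1 J gact (int n - 1) (S_3_m1 J gact (int n) v) = (A1 + k *\<^sub>R A5) - m *\<^sub>R (A6 + k *\<^sub>R A8)"
    unfolding R u' A1_def A5_def A6_def A8_def by (simp add: g_lin sl3_Emat br_ae)
  have X1: "G 3 1 (G 1 2 (G 2 3 v)) = G 2 3 (G 3 1 (G 1 2 v)) - real n *\<^sub>R v + G 3 1 (G 1 3 v)"
    by (simp add: br_eb br_cb br_fe fv Hv g_lin sl3_Emat)
  have X2: "G 2 3 (G 1 2 (G 3 1 v)) = G 2 3 (G 3 1 (G 1 2 v)) - G 2 3 (G 3 2 v)"
    by (simp add: br_ec g_lin sl3_Emat)
  have C4: "A7 = A8 - real n *\<^sub>R A2 + A4 + A6"
    unfolding A2_def A4_def A6_def A7_def A8_def X1 X2 by (simp add: g_lin sl3_Emat algebra_simps)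
  have "G 1 2 ((G 3 1 (G 1 3 v) - G 1 3 (G 3 1 v)) + (G 2 3 (G 3 2 v) - G 3 2 (G 2 3 v))) = G 1 2 (real n *\<^sub>R v)"
    using br_H[of v] Hv by simp
  then have C5: "A4 = real n *\<^sub>R A2 + A3 + A5 - A6"
    unfolding A2_def A3_def A4_def A5_def A6_def by (simp add: g_lin sl3_Emat algebra_simps)
  have fin: "((A1 - A2) - k *\<^sub>R A3 + m *\<^sub>R (A4 - k *\<^sub>R A7)) - ((A1 + k *\<^sub>R A5) - m *\<^sub>R (A6 + k *\<^sub>R A8))
      = (m * real n - 1) *\<^sub>R A2 + (m - m * k - k) *\<^sub>R (A3 + A5)"
    unfolding C4 C5 by (simp add: algebra_simps)
  have f1: "m * real n - 1 = 0" using n1 by (simp add: m_def)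
  have f2: "m - m * k - k = 0" using n1 by (simp add: m_def k_def field_simps)
  show ?thesis unfolding LHS RHS using fin f1 f2 by simp
qed

end


theorem proposition6p1:
  fixes J :: "'v::real_normed_vector \<Rightarrow> 'v"
    and gact kact :: "cmat \<Rightarrow> 'v \<Rightarrow> 'v"
    and h p :: int
  assumes "gK_module J gact kact"
    and "p \<ge> 0" and "even (h - p)"
  shows "(\<forall>v\<in>Vhpp J gact kact h p. S_3_1 gact v \<in> Vhpp J gact kact (h + 3) (p + 1))
       \<and> (\<forall>v\<in>Vhpp J gact kact h p. S_m3_1 gact v \<in> Vhpp J gact kact (h - 3) (p + 1))
       \<and> (\<forall>v\<in>Vhpp J gact kact h p. S_3_m1 J gact p v \<in> Vhpp J gact kact (h + 3) (p - 1))
       \<and> (\<forall>v\<in>Vhpp J gact kact h p. S_m3_m1 J gact p v \<in> Vhpp J gact kact (h - 3) (p - 1))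
       \<and> (\<forall>v\<in>Vhpp J gact kact h p. S_3_1 gact (S_m3_1 gact v) = S_m3_1 gact (S_3_1 gact v))
       \<and> (\<forall>v\<in>Vhpp J gact kact h p.
            S_3_m1 J gact (p - 1) (S_m3_m1 J gact p v) = S_m3_m1 J gact (p - 1) (S_3_m1 J gact p v))"
proof -
  interpret gkm J gact kact by (rule gkm.intro) (rule assms(1))
  obtain n where p: "p = int n" using assms(2) nonneg_int_cases by blast
  have s: "int n + 1 = int (Suc n)" by simp
  show ?thesis
    unfolding p s S_3_1_def S_m3_1_def Z31_def Z23_def
    using S31_in S23_in S3m1_in Sm3m1_in comm1 comm2 by blast
qed

end
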